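(* Let $\delta:\mathbb R\to\mathbb R$ be any function with $\lim_{x\to\infty}\delta(x)=\infty$. Suppose that, for every depth $d$, no family of depth-$d$ $\mathrm{QAC}^0$ circuits with $n$ input qubits and $n^{1+\exp(-d/\delta(d))}$ ancilla qubits computes $\mathrm{PARITY}_n$ with worst-case error $\mathrm{negl}(n)$. Then no family of $\mathrm{QAC}^0$ circuits (of constant depth) with an arbitrary polynomial number of ancilla qubits computes $\mathrm{PARITY}_n$ with worst-case error $\mathrm{negl}(n)$.
   Context: A depth-$d$ $\mathrm{QAC}^0$ circuit on $m$ qubits is a unitary $U=L_dM_d\cdots L_1M_1L_0$ where each $L_i$ is a tensor product of single-qubit unitaries and each $M_i$ is a tensor product of multi-qubit CZ gates $I-2|1^s\rangle\langle1^s|$ on pairwise disjoint sets of qubits; ancillae are initialized to $|0\rangle$, and the output is the computational-basis measurement of the first qubit. Worst-case error $\epsilon$ means the output differs from $\mathrm{PARITY}_n(x)=\bigoplus_ix_i$ with probability at most $\epsilon$ for every input $x$. $\mathrm{negl}(n)$ is a function smaller than every inverse polynomial for large $n$. *)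

theory Defs
  imports "HOL-Analysis.Analysis" "HOL-Library.FuncSet"
begin

text \<open>Qubits are indexed 0..m-1. Computational basis states of m qubits are
  extensional functions from {..<m} to bool. A state is a complex amplitude
  function on basis strings.\<close>

type_synonym qstate = "(nat \<Rightarrow> bool) \<Rightarrow> complex"

definition bits :: "nat \<Rightarrow> (nat \<Rightarrow> bool) set" where
  "bits m = PiE {..<m} (\<lambda>_. UNIV)"

text \<open>A single-qubit gate is a 2x2 complex matrix u (row, column) indexed by bool
  (False = |0>, True = |1>); it is unitary iff u^dagger u = I.\<close>
definition unitary2 :: "(bool \<Rightarrow> bool \<Rightarrow> complex) \<Rightarrow> bool" where
  "unitary2 u \<longleftrightarrow> (\<forall>a b. (\<Sum>k\<in>(UNIV::bool set). cnj (u k a) * u k b) = (if a = b then 1 else 0))"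

definition apply_local :: "nat \<Rightarrow> (nat \<Rightarrow> bool \<Rightarrow> bool \<Rightarrow> complex) \<Rightarrow> qstate \<Rightarrow> qstate" where
  "apply_local m u \<psi> = (\<lambda>x. \<Sum>y\<in>bits m. (\<Prod>i<m. u i (x i) (y i)) * \<psi> y)"

text \<open>A layer of multi-qubit CZ gates I - 2|1^s><1^s| on the pairwise disjoint
  qubit sets s in S.\<close>
definition apply_cz :: "nat set set \<Rightarrow> qstate \<Rightarrow> qstate" where
  "apply_cz S \<psi> = (\<lambda>x. (-1) ^ card {s\<in>S. \<forall>i\<in>s. x i} * \<psi> x)"

definition valid_cz_layer :: "nat \<Rightarrow> nat set set \<Rightarrow> bool" where
  "valid_cz_layer m S \<longleftrightarrow> (\<forall>s\<in>S. s \<noteq> {} \<and> s \<subseteq> {..<m}) \<and>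
     (\<forall>s\<in>S. \<forall>t\<in>S. s \<noteq> t \<longrightarrow> s \<inter> t = {})"

text \<open>A depth-d QAC0 circuit on m qubits: single-qubit layers L 0, ..., L d
  (L j i is the gate on qubit i in layer j) and CZ layers M 1, ..., M d;
  U = L_d M_d ... L_1 M_1 L_0.\<close>
definition valid_circuit :: "nat \<Rightarrow> nat \<Rightarrow> (nat \<Rightarrow> nat \<Rightarrow> bool \<Rightarrow> bool \<Rightarrow> complex)
    \<Rightarrow> (nat \<Rightarrow> nat set set) \<Rightarrow> bool" where
  "valid_circuit d m L M \<longleftrightarrow> (\<forall>j\<le>d. \<forall>i<m. unitary2 (L j i)) \<and> (\<forall>j\<in>{1..d}. valid_cz_layer m (M j))"

fun run_circuit :: "nat \<Rightarrow> (nat \<Rightarrow> nat \<Rightarrow> bool \<Rightarrow> bool \<Rightarrow> complex) \<Rightarrow> (nat \<Rightarrow> nat set set)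
    \<Rightarrow> nat \<Rightarrow> qstate \<Rightarrow> qstate" where
  "run_circuit m L M 0 \<psi> = apply_local m (L 0) \<psi>"
| "run_circuit m L M (Suc j) \<psi> = apply_local m (L (Suc j)) (apply_cz (M (Suc j)) (run_circuit m L M j \<psi>))"

definition input_state :: "nat \<Rightarrow> nat \<Rightarrow> (nat \<Rightarrow> bool) \<Rightarrow> qstate" where
  "input_state n m x = (\<lambda>y. if y = restrict (\<lambda>i. i < n \<and> x i) {..<m} then 1 else 0)"

definition prob_one :: "nat \<Rightarrow> nat \<Rightarrow> (nat \<Rightarrow> nat \<Rightarrow> bool \<Rightarrow> bool \<Rightarrow> complex) \<Rightarrow> (nat \<Rightarrow> nat set set)
    \<Rightarrow> nat \<Rightarrow> (nat \<Rightarrow> bool) \<Rightarrow> real" where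
  "prob_one d m L M n x =
     (\<Sum>y\<in>{y\<in>bits m. y 0}. (cmod (run_circuit m L M d (input_state n m x) y))\<^sup>2)"

definition parity :: "nat \<Rightarrow> (nat \<Rightarrow> bool) \<Rightarrow> bool" where
  "parity n x \<longleftrightarrow> odd (card {i. i < n \<and> x i})"

definition parity_error :: "nat \<Rightarrow> nat \<Rightarrow> (nat \<Rightarrow> nat \<Rightarrow> bool \<Rightarrow> bool \<Rightarrow> complex) \<Rightarrow> (nat \<Rightarrow> nat set set)
    \<Rightarrow> nat \<Rightarrow> (nat \<Rightarrow> bool) \<Rightarrow> real" where
  "parity_error d m L M n x =
     (if parity n x then 1 - prob_one d m L M n x else prob_one d m L M n x)"

definition negl :: "(nat \<Rightarrow> real) \<Rightarrow> bool" where
  "negl \<epsilon> \<longleftrightarrow> (\<forall>k::nat. \<forall>\<^sub>F n in sequentially. \<bar>\<epsilon> n\<bar> < 1 / real n ^ k)"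

definition qac0_computes_parity ::
  "nat \<Rightarrow> (nat \<Rightarrow> nat) \<Rightarrow> (nat \<Rightarrow> nat \<Rightarrow> nat \<Rightarrow> bool \<Rightarrow> bool \<Rightarrow> complex) \<Rightarrow> (nat \<Rightarrow> nat \<Rightarrow> nat set set) \<Rightarrow> bool" where
  "qac0_computes_parity d anc L M \<longleftrightarrow>
     (\<forall>n\<ge>1. valid_circuit d (n + anc n) (L n) (M n)) \<and>
     (\<exists>\<epsilon>. negl \<epsilon> \<and> (\<forall>n\<ge>1. \<forall>x\<in>bits n. parity_error d (n + anc n) (L n) (M n) n x \<le> \<epsilon> n))"

end

theory Submission
  imports Defs
begin


definition pb :: "(nat \<Rightarrow> nat) \<Rightarrow> nat \<Rightarrow> (nat \<Rightarrow> bool) \<Rightarrow> nat \<Rightarrow> bool" where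
  "pb p k y = restrict (y \<circ> p) {..<k}"

lemma pb_bits[simp]: "pb p k y \<in> bits k"
  by (simp add: pb_def bits_def)

lemma finite_bits[simp]: "finite (bits m)"
  by (simp add: bits_def finite_PiE)

locale blocks =
  fixes m :: nat and I :: "nat set" and mm :: "nat \<Rightarrow> nat" and p :: "nat \<Rightarrow> nat \<Rightarrow> nat"
  assumes finI: "finite I"
  and injp: "\<And>l i i'. l\<in>I \<Longrightarrow> i < mm l \<Longrightarrow> i' < mm l \<Longrightarrow> p l i = p l i' \<Longrightarrow> i = i'"
  and rng: "\<And>l i. l\<in>I \<Longrightarrow> i < mm l \<Longrightarrow> p l i < m"
  and disj: "\<And>l l' i i'. l\<in>I \<Longrightarrow> l'\<in>I \<Longrightarrow> i < mm l \<Longrightarrow> i' < mm l' \<Longrightarrow> p l i = p l' i' \<Longrightarrow> l = l'"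
  and cover: "\<And>q. q < m \<Longrightarrow> \<exists>l\<in>I. \<exists>i<mm l. p l i = q"
begin

definition own :: "nat \<Rightarrow> nat" where "own q = (SOME l. l\<in>I \<and> (\<exists>i<mm l. p l i = q))"
definition idx :: "nat \<Rightarrow> nat" where "idx q = (SOME i. i < mm (own q) \<and> p (own q) i = q)"

lemma own: assumes "q < m" shows "own q \<in> I" "idx q < mm (own q)" "p (own q) (idx q) = q"
proof -
  have 1: "own q \<in> I \<and> (\<exists>i<mm (own q). p (own q) i = q)"
    unfolding own_def by (rule someI_ex) (use cover[OF assms] in blast)
  then show "own q \<in> I" by blast
  have "idx q < mm (own q) \<and> p (own q) (idx q) = q"
    unfolding idx_def by (rule someI_ex) (use 1 in blast)
  then show "idx q < mm (own q)" "p (own q) (idx q) = q" by auto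
qed

lemma own_p: assumes "l \<in> I" "i < mm l" shows "own (p l i) = l" "idx (p l i) = i"
proof -
  have q: "p l i < m" using rng assms by blast
  show 1: "own (p l i) = l" using own[OF q] disj assms by metis
  show "idx (p l i) = i" using own[OF q] injp assms 1 by metis
qed

lemma prod_split: "(\<Prod>q<m. f q) = (\<Prod>l\<in>I. \<Prod>i<mm l. f (p l i))"
proof -
  have "(\<Prod>q<m. f q) = (\<Prod>li\<in>Sigma I (\<lambda>l. {..<mm l}). f (p (fst li) (snd li)))"
    by (rule prod.reindex_bij_witness[where i="\<lambda>li. p (fst li) (snd li)" and j="\<lambda>q. (own q, idx q)"])
       (auto simp: own own_p rng)
  also have "\<dots> = (\<Prod>l\<in>I. \<Prod>i<mm l. f (p l i))"
    by (subst prod.Sigma) (auto simp: finI split_def)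
  finally show ?thesis .
qed

lemma sum_prod:
  fixes g :: "nat \<Rightarrow> (nat \<Rightarrow> bool) \<Rightarrow> 'c::comm_semiring_1"
  shows "(\<Sum>y\<in>bits m. \<Prod>l\<in>I. g l (pb (p l) (mm l) y)) = (\<Prod>l\<in>I. \<Sum>z\<in>bits (mm l). g l z)"
proof -
  have "(\<Prod>l\<in>I. \<Sum>z\<in>bits (mm l). g l z) = (\<Sum>G\<in>PiE I (\<lambda>l. bits (mm l)). \<Prod>l\<in>I. g l (G l))"
    by (rule prod_sum_PiE) (auto simp: finI)
  also have "\<dots> = (\<Sum>y\<in>bits m. \<Prod>l\<in>I. g l (pb (p l) (mm l) y))"
  proof (rule sum.reindex_bij_witness[where i="\<lambda>y. \<lambda>l\<in>I. pb (p l) (mm l) y"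
        and j="\<lambda>G q. if q < m then G (own q) (idx q) else undefined"])
    fix G assume G: "G \<in> PiE I (\<lambda>l. bits (mm l))"
    show "(\<lambda>l\<in>I. pb (p l) (mm l) (\<lambda>q. if q < m then G (own q) (idx q) else undefined)) = G"
    proof (rule ext)
      fix l show "(\<lambda>l\<in>I. pb (p l) (mm l) (\<lambda>q. if q < m then G (own q) (idx q) else undefined)) l = G l"
      proof (cases "l \<in> I")
        case True
        have "G l \<in> bits (mm l)" using G True by auto
        then have extG: "\<And>i. \<not> i < mm l \<Longrightarrow> G l i = undefined" by (auto simp: bits_def PiE_def extensional_def)
        have "pb (p l) (mm l) (\<lambda>q. if q < m then G (own q) (idx q) else undefined) = G l"
        proof (rule ext)
          fix i show "pb (p l) (mm l) (\<lambda>q. if q < m then G (own q) (idx q) else undefined) i = G l i"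
            using True by (cases "i < mm l") (auto simp: pb_def own_p rng extG)
        qed
        then show ?thesis using True by simp
      next
        case False then show ?thesis using G by (auto simp: PiE_def extensional_def)
      qed
    qed
    show "(\<lambda>q. if q < m then G (own q) (idx q) else undefined) \<in> bits m"
      by (auto simp: bits_def)
    show "(\<Prod>l\<in>I. g l (pb (p l) (mm l) (\<lambda>q. if q < m then G (own q) (idx q) else undefined)))
        = (\<Prod>l\<in>I. g l (G l))"
    proof (rule prod.cong[OF refl])
      fix l assume l: "l \<in> I"
      have "G l \<in> bits (mm l)" using G l by auto
      then have extG: "\<And>i. \<not> i < mm l \<Longrightarrow> G l i = undefined" by (auto simp: bits_def PiE_def extensional_def)
      have "pb (p l) (mm l) (\<lambda>q. if q < m then G (own q) (idx q) else undefined) = G l"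
      proof (rule ext)
        fix i show "pb (p l) (mm l) (\<lambda>q. if q < m then G (own q) (idx q) else undefined) i = G l i"
          using l by (cases "i < mm l") (auto simp: pb_def own_p rng extG)
      qed
      then show "g l (pb (p l) (mm l) (\<lambda>q. if q < m then G (own q) (idx q) else undefined)) = g l (G l)"
        by simp
    qed
  next
    fix y assume y: "y \<in> bits m"
    show "(\<lambda>q. if q < m then (\<lambda>l\<in>I. pb (p l) (mm l) y) (own q) (idx q) else undefined) = y"
    proof (rule ext)
      fix q show "(if q < m then (\<lambda>l\<in>I. pb (p l) (mm l) y) (own q) (idx q) else undefined) = y q"
        using y own[of q] by (auto simp: pb_def bits_def PiE_def extensional_def)
    qed
    show "(\<lambda>l\<in>I. pb (p l) (mm l) y) \<in> PiE I (\<lambda>l. bits (mm l))" by auto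
  qed
  finally show ?thesis ..
qed

lemma local_prod:
  assumes u: "\<And>l i. l\<in>I \<Longrightarrow> i < mm l \<Longrightarrow> u (p l i) = uu l i"
  and psi: "\<And>y. y\<in>bits m \<Longrightarrow> \<psi> y = (\<Prod>l\<in>I. \<phi> l (pb (p l) (mm l) y))"
  shows "apply_local m u \<psi> x = (\<Prod>l\<in>I. apply_local (mm l) (uu l) (\<phi> l) (pb (p l) (mm l) x))"
proof -
  let ?g = "\<lambda>l z. (\<Prod>i<mm l. uu l i (pb (p l) (mm l) x i) (z i)) * \<phi> l z"
  have "apply_local m u \<psi> x = (\<Sum>y\<in>bits m. \<Prod>l\<in>I. ?g l (pb (p l) (mm l) y))"
    unfolding apply_local_def
  proof (rule sum.cong[OF refl])
    fix y assume y: "y \<in> bits m"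
    have "(\<Prod>i<m. u i (x i) (y i)) = (\<Prod>l\<in>I. \<Prod>i<mm l. u (p l i) (x (p l i)) (y (p l i)))" by (rule prod_split)
    also have "\<dots> = (\<Prod>l\<in>I. \<Prod>i<mm l. uu l i (pb (p l) (mm l) x i) (pb (p l) (mm l) y i))"
      by (auto intro!: prod.cong simp: u pb_def)
    finally show "(\<Prod>i<m. u i (x i) (y i)) * \<psi> y = (\<Prod>l\<in>I. ?g l (pb (p l) (mm l) y))"
      using psi[OF y] by (simp add: prod.distrib)
  qed
  also have "\<dots> = (\<Prod>l\<in>I. \<Sum>z\<in>bits (mm l). ?g l z)" by (rule sum_prod)
  finally show ?thesis unfolding apply_local_def .
qed

lemma cz_card:
  assumes S: "\<And>l. l\<in>I \<Longrightarrow> \<forall>s\<in>S l. s \<noteq> {} \<and> s \<subseteq> {..<mm l}"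
  shows "card {s\<in>(\<Union>l\<in>I. image (p l) ` S l). \<forall>i\<in>s. x i} = (\<Sum>l\<in>I. card {s\<in>S l. \<forall>i\<in>s. pb (p l) (mm l) x i})"
proof -
  have eq: "{s\<in>(\<Union>l\<in>I. image (p l) ` S l). \<forall>i\<in>s. x i} = (\<Union>l\<in>I. image (p l) ` {s\<in>S l. \<forall>i\<in>s. pb (p l) (mm l) x i})"
  proof (intro equalityI subsetI)
    fix t assume "t \<in> {s\<in>(\<Union>l\<in>I. image (p l) ` S l). \<forall>i\<in>s. x i}"
    then obtain l s where l: "l \<in> I" "s \<in> S l" "t = p l ` s" "\<forall>i\<in>t. x i" by auto
    have "s \<subseteq> {..<mm l}" using S[OF l(1)] l(2) by auto
    then have "\<forall>i\<in>s. pb (p l) (mm l) x i" using l by (auto simp: pb_def)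
    then show "t \<in> (\<Union>l\<in>I. image (p l) ` {s\<in>S l. \<forall>i\<in>s. pb (p l) (mm l) x i})" using l by auto
  next
    fix t assume "t \<in> (\<Union>l\<in>I. image (p l) ` {s\<in>S l. \<forall>i\<in>s. pb (p l) (mm l) x i})"
    then obtain l s where l: "l \<in> I" "s \<in> S l" "t = p l ` s" "\<forall>i\<in>s. pb (p l) (mm l) x i" by auto
    have "s \<subseteq> {..<mm l}" using S[OF l(1)] l(2) by auto
    then have "\<forall>i\<in>t. x i"
    proof (intro ballI)
      fix i assume "s \<subseteq> {..<mm l}" "i \<in> t"
      then obtain i0 where "i0 \<in> s" "i = p l i0" "i0 < mm l" using l(3) by auto
      then show "x i" using l(4) by (auto simp: pb_def)
    qed
    then show "t \<in> {s\<in>(\<Union>l\<in>I. image (p l) ` S l). \<forall>i\<in>s. x i}" using l by auto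
  qed
  have fin: "\<And>l. l\<in>I \<Longrightarrow> finite (S l)"
    by (rule finite_subset[of _ "Pow {..<mm l}" for l]) (use S in auto)
  have injl: "\<And>l. l \<in> I \<Longrightarrow> inj_on (p l) {..<mm l}" using injp by (auto simp: inj_on_def)
  have "card (\<Union>l\<in>I. image (p l) ` {s\<in>S l. \<forall>i\<in>s. pb (p l) (mm l) x i})
      = (\<Sum>l\<in>I. card (image (p l) ` {s\<in>S l. \<forall>i\<in>s. pb (p l) (mm l) x i}))"
  proof (rule card_UN_disjoint)
    show "finite I" by (rule finI)
    show "\<forall>l\<in>I. finite (image (p l) ` {s\<in>S l. \<forall>i\<in>s. pb (p l) (mm l) x i})" using fin by auto
    show "\<forall>l\<in>I. \<forall>l'\<in>I. l \<noteq> l' \<longrightarrow> image (p l) ` {s\<in>S l. \<forall>i\<in>s. pb (p l) (mm l) x i} \<inter> image (p l') ` {s\<in>S l'. \<forall>i\<in>s. pb (p l') (mm l') x i} = {}"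
    proof (intro ballI impI)
      fix l l' assume ll: "l \<in> I" "l' \<in> I" "l \<noteq> l'"
      show "image (p l) ` {s\<in>S l. \<forall>i\<in>s. pb (p l) (mm l) x i} \<inter> image (p l') ` {s\<in>S l'. \<forall>i\<in>s. pb (p l') (mm l') x i} = {}"
      proof (rule ccontr)
        assume "\<not> ?thesis"
        then obtain a b where ab: "a \<in> S l" "b \<in> S l'" "p l ` a = p l' ` b" by auto
        obtain i where i: "i \<in> a" using S[OF ll(1)] ab(1) by blast
        then have "p l i \<in> p l' ` b" using ab(3) by blast
        then obtain i' where i': "i' \<in> b" "p l i = p l' i'" by auto
        have "i < mm l" using S[OF ll(1)] ab(1) i by auto
        moreover have "i' < mm l'" using S[OF ll(2)] ab(2) i' by auto
        ultimately have "l = l'" using disj ll i' by blast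
        then show False using ll by simp
      qed
    qed
  qed
  also have "\<dots> = (\<Sum>l\<in>I. card {s\<in>S l. \<forall>i\<in>s. pb (p l) (mm l) x i})"
  proof (rule sum.cong[OF refl])
    fix l assume l: "l \<in> I"
    have "inj_on (image (p l)) {s\<in>S l. \<forall>i\<in>s. pb (p l) (mm l) x i}"
      using inj_on_image_eq_iff[OF injl[OF l]] S[OF l] by (auto simp: inj_on_def)
    then show "card (image (p l) ` {s\<in>S l. \<forall>i\<in>s. pb (p l) (mm l) x i}) = card {s\<in>S l. \<forall>i\<in>s. pb (p l) (mm l) x i}"
      by (rule card_image)
  qed
  finally show ?thesis using eq by simp
qed

lemma run_prod:
  assumes L: "\<And>j l i. j \<le> d \<Longrightarrow> l\<in>I \<Longrightarrow> i < mm l \<Longrightarrow> L j (p l i) = LL l j i"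
  and M: "\<And>j. 1 \<le> j \<Longrightarrow> j \<le> d \<Longrightarrow> M j = (\<Union>l\<in>I. image (p l) ` MM l j)"
  and MM: "\<And>j l. 1 \<le> j \<Longrightarrow> j \<le> d \<Longrightarrow> l\<in>I \<Longrightarrow> \<forall>s\<in>MM l j. s \<noteq> {} \<and> s \<subseteq> {..<mm l}"
  and psi: "\<And>y. y\<in>bits m \<Longrightarrow> \<psi> y = (\<Prod>l\<in>I. \<phi> l (pb (p l) (mm l) y))"
  shows "run_circuit m L M d \<psi> x = (\<Prod>l\<in>I. run_circuit (mm l) (LL l) (MM l) d (\<phi> l) (pb (p l) (mm l) x))"
  using L M MM
proof (induction d arbitrary: x)
  case 0
  then show ?case using local_prod[where u="L 0" and uu="\<lambda>l. LL l 0" and \<psi>=\<psi> and \<phi>=\<phi> and x=x] psi by simp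
next
  case (Suc d)
  have IH: "\<And>x. run_circuit m L M d \<psi> x = (\<Prod>l\<in>I. run_circuit (mm l) (LL l) (MM l) d (\<phi> l) (pb (p l) (mm l) x))"
    using Suc by simp
  have cz: "\<And>y. y \<in> bits m \<Longrightarrow> apply_cz (M (Suc d)) (run_circuit m L M d \<psi>) y
     = (\<Prod>l\<in>I. apply_cz (MM l (Suc d)) (run_circuit (mm l) (LL l) (MM l) d (\<phi> l)) (pb (p l) (mm l) y))"
  proof -
    fix y
    have "card {s\<in>M (Suc d). \<forall>i\<in>s. y i} = (\<Sum>l\<in>I. card {s\<in>MM l (Suc d). \<forall>i\<in>s. pb (p l) (mm l) y i})"
      using Suc.prems(2)[of "Suc d"] cz_card[of "\<lambda>l. MM l (Suc d)" y] Suc.prems(3)[of "Suc d"] by auto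
    then show "apply_cz (M (Suc d)) (run_circuit m L M d \<psi>) y
     = (\<Prod>l\<in>I. apply_cz (MM l (Suc d)) (run_circuit (mm l) (LL l) (MM l) d (\<phi> l)) (pb (p l) (mm l) y))"
      by (simp add: apply_cz_def IH power_sum prod.distrib)
  qed
  show ?case
    using local_prod[where u="L (Suc d)" and uu="\<lambda>l. LL l (Suc d)" and \<psi>="apply_cz (M (Suc d)) (run_circuit m L M d \<psi>)"
       and \<phi>="\<lambda>l. apply_cz (MM l (Suc d)) (run_circuit (mm l) (LL l) (MM l) d (\<phi> l))" and x=x] cz Suc.prems(1)
    by simp
qed

end


definition nrm :: "nat \<Rightarrow> qstate \<Rightarrow> real" where
  "nrm m \<psi> = (\<Sum>y\<in>bits m. (cmod (\<psi> y))\<^sup>2)"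

definition idg :: "bool \<Rightarrow> bool \<Rightarrow> complex" where "idg a b = (if a = b then 1 else 0)"

lemma unitary_idg: "unitary2 idg"
  unfolding unitary2_def idg_def by (auto simp: UNIV_bool)

lemma bits_eqI: "x \<in> bits m \<Longrightarrow> y \<in> bits m \<Longrightarrow> (\<And>i. i < m \<Longrightarrow> x i = y i) \<Longrightarrow> x = y"
  by (auto simp: bits_def PiE_def extensional_def intro!: ext)

lemma prod_ind: "x \<in> bits m \<Longrightarrow> y \<in> bits m \<Longrightarrow>
   (\<Prod>i<m. (if x i = y i then 1 else 0) :: 'a::comm_semiring_1) = (if x = y then 1 else 0)"
proof (cases "x = y")
  case False
  assume b: "x \<in> bits m" "y \<in> bits m"
  then obtain i where "i < m" "x i \<noteq> y i" using bits_eqI False by blast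
  then show ?thesis using False by (auto intro!: prod_zero)
qed simp

lemma local_idg: "x \<in> bits m \<Longrightarrow> apply_local m (\<lambda>_. idg) \<psi> x = \<psi> x"
proof -
  assume x: "x \<in> bits m"
  have "apply_local m (\<lambda>_. idg) \<psi> x = (\<Sum>y\<in>bits m. (if x = y then \<psi> y else 0))"
    unfolding apply_local_def idg_def using x by (intro sum.cong) (auto simp: prod_ind)
  also have "\<dots> = \<psi> x" using x by simp
  finally show ?thesis .
qed

lemma cz_empty[simp]: "apply_cz {} \<psi> = \<psi>"
  by (simp add: apply_cz_def)

lemma run_idg: "x \<in> bits m \<Longrightarrow> run_circuit m (\<lambda>_ _. idg) (\<lambda>_. {}) d \<psi> x = \<psi> x"
  by (induction d arbitrary: x) (simp_all add: local_idg)

lemma local_norm: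
  assumes u: "\<forall>i<m. unitary2 (u i)"
  shows "nrm m (apply_local m u \<psi>) = nrm m \<psi>"
proof -
  let ?B = "bits m"
  let ?U = "\<lambda>x y. \<Prod>i<m. u i (x i) (y i)"
  have key: "(\<Sum>x\<in>?B. ?U x y * cnj (?U x y')) = (if y = y' then 1 else 0)"
    if y: "y \<in> ?B" "y' \<in> ?B" for y y'
  proof -
    have "(\<Sum>x\<in>?B. ?U x y * cnj (?U x y')) = (\<Sum>x\<in>?B. \<Prod>i<m. u i (x i) (y i) * cnj (u i (x i) (y' i)))"
      by (simp add: prod.distrib)
    also have "\<dots> = (\<Prod>i<m. \<Sum>b\<in>UNIV. u i b (y i) * cnj (u i b (y' i)))"
      unfolding bits_def by (rule prod_sum_PiE[symmetric]) auto
    also have "\<dots> = (\<Prod>i<m. if y i = y' i then 1 else 0)"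
    proof (rule prod.cong[OF refl])
      fix i assume "i \<in> {..<m}"
      then have "unitary2 (u i)" using u by auto
      then have "(\<Sum>k\<in>UNIV. cnj (u i k (y' i)) * u i k (y i)) = (if y' i = y i then 1 else 0)"
        unfolding unitary2_def by blast
      then show "(\<Sum>b\<in>UNIV. u i b (y i) * cnj (u i b (y' i))) = (if y i = y' i then 1 else 0)"
        by (auto simp: mult.commute)
    qed
    also have "\<dots> = (if y = y' then 1 else 0)" by (rule prod_ind[OF y])
    finally show ?thesis .
  qed
  have "complex_of_real (nrm m (apply_local m u \<psi>))
     = (\<Sum>x\<in>?B. (\<Sum>y\<in>?B. ?U x y * \<psi> y) * cnj (\<Sum>y'\<in>?B. ?U x y' * \<psi> y'))"
    unfolding nrm_def apply_local_def of_real_sum by (intro sum.cong refl) (rule complex_norm_square)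
  also have "\<dots> = (\<Sum>x\<in>?B. \<Sum>y\<in>?B. \<Sum>y'\<in>?B. (?U x y * cnj (?U x y')) * (\<psi> y * cnj (\<psi> y')))"
    by (simp add: sum_product mult_ac)
  also have "\<dots> = (\<Sum>y\<in>?B. \<Sum>x\<in>?B. \<Sum>y'\<in>?B. (?U x y * cnj (?U x y')) * (\<psi> y * cnj (\<psi> y')))"
    by (rule sum.swap)
  also have "\<dots> = (\<Sum>y\<in>?B. \<Sum>y'\<in>?B. \<Sum>x\<in>?B. (?U x y * cnj (?U x y')) * (\<psi> y * cnj (\<psi> y')))"
    by (rule sum.cong[OF refl], rule sum.swap)
  also have "\<dots> = (\<Sum>y\<in>?B. \<Sum>y'\<in>?B. (if y = y' then 1 else 0) * (\<psi> y * cnj (\<psi> y')))"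
    by (intro sum.cong refl, subst sum_distrib_right[symmetric], simp only: key)
  also have "\<dots> = (\<Sum>y\<in>?B. \<psi> y * cnj (\<psi> y))"
    by (intro sum.cong refl) (simp add: if_distrib[where f="\<lambda>c. c * _"] cong: if_cong)
  also have "\<dots> = complex_of_real (nrm m \<psi>)"
    unfolding nrm_def of_real_sum by (intro sum.cong refl) (rule complex_norm_square[symmetric])
  finally show ?thesis using of_real_eq_iff by blast
qed

lemma cz_norm: "nrm m (apply_cz S \<psi>) = nrm m \<psi>"
  unfolding nrm_def apply_cz_def by (simp add: norm_mult norm_power)

lemma run_norm:
  assumes "\<forall>j\<le>d. \<forall>i<m. unitary2 (L j i)"
  shows "nrm m (run_circuit m L M d \<psi>) = nrm m \<psi>"
  using assms by (induction d) (simp_all add: local_norm cz_norm)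

lemma local_add: "apply_local m u (\<lambda>y. a y + b y) = (\<lambda>x. apply_local m u a x + apply_local m u b x)"
  unfolding apply_local_def by (simp add: algebra_simps sum.distrib)

lemma cz_add: "apply_cz S (\<lambda>y. a y + b y) = (\<lambda>x. apply_cz S a x + apply_cz S b x)"
  unfolding apply_cz_def by (simp add: algebra_simps)

lemma run_add: "run_circuit m L M d (\<lambda>y. a y + b y) = (\<lambda>x. run_circuit m L M d a x + run_circuit m L M d b x)"
  by (induction d) (simp_all add: local_add cz_add)

lemma run_cong:
  assumes "\<And>j. j \<le> d \<Longrightarrow> L j = L' j" "\<And>j. 1 \<le> j \<Longrightarrow> j \<le> d \<Longrightarrow> M j = M' j"
  shows "run_circuit m L M d \<psi> = run_circuit m L' M' d \<psi>"
  using assms by (induction d) auto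

lemma run_seq:
  assumes "M (Suc D) = {}"
  shows "run_circuit m L M (Suc D + E) \<psi> = run_circuit m (\<lambda>j. L (Suc D + j)) (\<lambda>j. M (Suc D + j)) E (run_circuit m L M D \<psi>)"
  by (induction E) (simp_all add: assms)



context blocks begin

definition glue :: "(nat \<Rightarrow> nat \<Rightarrow> bool) \<Rightarrow> nat \<Rightarrow> bool" where
  "glue G = (\<lambda>q. if q < m then G (own q) (idx q) else undefined)"

lemma glue_bits[simp]: "glue G \<in> bits m" by (auto simp: glue_def bits_def PiE_def extensional_def)

lemma glue_pb: "y \<in> bits m \<Longrightarrow> glue (\<lambda>l. pb (p l) (mm l) y) = y"
  by (rule ext) (auto simp: glue_def pb_def own bits_def PiE_def extensional_def)

lemma pb_glue: assumes "l \<in> I" "G l \<in> bits (mm l)" shows "pb (p l) (mm l) (glue G) = G l"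
proof (rule ext)
  fix i
  have "\<And>i. \<not> i < mm l \<Longrightarrow> G l i = undefined" using assms(2) by (auto simp: bits_def PiE_def extensional_def)
  then show "pb (p l) (mm l) (glue G) i = G l i"
    using assms by (cases "i < mm l") (auto simp: pb_def glue_def own_p rng)
qed

lemma pb_eq_iff: assumes "y \<in> bits m" "y' \<in> bits m"
  shows "(y = y') \<longleftrightarrow> (\<forall>l\<in>I. pb (p l) (mm l) y = pb (p l) (mm l) y')"
proof
  assume "\<forall>l\<in>I. pb (p l) (mm l) y = pb (p l) (mm l) y'"
  then have "glue (\<lambda>l. pb (p l) (mm l) y) = glue (\<lambda>l. pb (p l) (mm l) y')"
    unfolding glue_def using own by (auto intro!: ext)
  then show "y = y'" using glue_pb assms by simp
qed simp

end

lemma prod_ind_gen: "finite I \<Longrightarrow> (\<Prod>l\<in>I. (if P l then 1 else 0) :: 'a::comm_semiring_1) = (if \<forall>l\<in>I. P l then 1 else 0)"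
  by (induction I rule: finite_induct) auto

lemma sum_filter_split: "finite B \<Longrightarrow> (\<Sum>y\<in>B. f y) = (\<Sum>y\<in>{y\<in>B. P y}. f y) + (\<Sum>y\<in>{y\<in>B. \<not> P y}. f y)"
  by (subst sum.union_disjoint[symmetric]) (auto intro: sum.cong)

lemma nrm_basis: "t \<in> bits m \<Longrightarrow> nrm m (\<lambda>y. if y = t then 1 else 0) = 1"
  unfolding nrm_def by (simp add: if_distrib[where f="\<lambda>z. (cmod z)\<^sup>2"] cong: if_cong)

lemma restrict_bits: "restrict f {..<m} \<in> bits m" by (simp add: bits_def)

lemma nrm_input: "nrm m (input_state n m x) = 1"
  unfolding input_state_def by (rule nrm_basis[OF restrict_bits])

lemma perr:
  assumes U: "\<forall>j\<le>d. \<forall>i<m. unitary2 (L j i)" and m: "0 < m"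
  shows "parity_error d m L M n x = (\<Sum>y\<in>{y\<in>bits m. y 0 \<noteq> parity n x}. (cmod (run_circuit m L M d (input_state n m x) y))\<^sup>2)"
proof -
  let ?f = "\<lambda>y. (cmod (run_circuit m L M d (input_state n m x) y))\<^sup>2"
  have "1 = nrm m (run_circuit m L M d (input_state n m x))" using run_norm[OF U] nrm_input by simp
  also have "\<dots> = (\<Sum>y\<in>{y\<in>bits m. y 0}. ?f y) + (\<Sum>y\<in>{y\<in>bits m. \<not> y 0}. ?f y)"
    unfolding nrm_def by (rule sum_filter_split) simp
  finally have 1: "1 = (\<Sum>y\<in>{y\<in>bits m. y 0}. ?f y) + (\<Sum>y\<in>{y\<in>bits m. \<not> y 0}. ?f y)" .
  have e1: "{y\<in>bits m. y 0 \<noteq> True} = {y\<in>bits m. \<not> y 0}" by auto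
  have e2: "{y\<in>bits m. y 0 \<noteq> False} = {y\<in>bits m. y 0}" by auto
  show ?thesis
  proof (cases "parity n x")
    case True then show ?thesis unfolding parity_error_def prob_one_def using 1 e1 by simp
  next
    case False then show ?thesis unfolding parity_error_def prob_one_def using e2 by simp
  qed
qed

lemma odd_sum_card: "odd (\<Sum>l<(r::nat). c l :: nat) = odd (card {l. l < r \<and> odd (c l)})"
proof (induction r)
  case (Suc r)
  have e: "{l. l < Suc r \<and> odd (c l)} = {l. l < r \<and> odd (c l)} \<union> (if odd (c r) then {r} else {})"
    by (auto simp: less_Suc_eq)
  show ?case using Suc by (auto simp: e)
qed simp

lemma parity_blocks:
  assumes "n \<le> r * s"
  shows "parity n x = parity r (\<lambda>l. parity s (\<lambda>i. l * s + i < n \<and> x (l * s + i)))"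
proof -
  have "card {i. i < n \<and> x i} = (\<Sum>i<r * s. of_bool (i < n \<and> x i) :: nat)"
  proof -
    have "{..<r * s} \<inter> {i. i < n \<and> x i} = {i. i < n \<and> x i}" using assms by auto
    then show ?thesis by simp
  qed
  also have "\<dots> = (\<Sum>l<r. \<Sum>i\<in>{l * s..<l * s + s}. of_bool (i < n \<and> x i))"
    by (rule sum.nat_group[symmetric])
  also have "\<dots> = (\<Sum>l<r. card {i. i < s \<and> (l * s + i < n \<and> x (l * s + i))})"
  proof (rule sum.cong[OF refl])
    fix l
    have eqs: "{l * s..<l * s + s} = (\<lambda>i. l * s + i) ` {..<s}"
    proof (intro equalityI subsetI)
      fix i assume "i \<in> {l * s..<l * s + s}"
      then show "i \<in> (\<lambda>i. l * s + i) ` {..<s}" by (intro image_eqI[where x="i - l * s"]) auto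
    qed auto
    have "(\<Sum>i\<in>{l * s..<l * s + s}. of_bool (i < n \<and> x i) :: nat) = (\<Sum>i<s. of_bool (l * s + i < n \<and> x (l * s + i)))"
      unfolding eqs by (subst sum.reindex) (auto simp: inj_on_def)
    also have "\<dots> = card {i. i < s \<and> (l * s + i < n \<and> x (l * s + i))}"
    proof -
      have "{..<s} \<inter> {i. l * s + i < n \<and> x (l * s + i)} = {i. i < s \<and> (l * s + i < n \<and> x (l * s + i))}" by auto
      then show ?thesis by simp
    qed
    finally show "(\<Sum>i\<in>{l * s..<l * s + s}. of_bool (i < n \<and> x i) :: nat) = card {i. i < s \<and> (l * s + i < n \<and> x (l * s + i))}" .
  qed
  finally show ?thesis unfolding parity_def by (simp add: odd_sum_card)
qed



definition "p1 r s A l i = (if l < r then (if i < s then l * s + i else r * s + l * A + (i - s)) else r * s + r * A + i)"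
definition "mm1 r s A B l = (if l < r then s + A else B)"
definition "pA r s A i = (if i < r then i * s else r * s + r * A + (i - r))"
definition "G1 r s A Ls j q = (if q < r * s then Ls j (q mod s) else if q < r * s + r * A then Ls j (s + (q - r * s) mod A) else idg)"
definition "MM1 r Ms l j = (if l < r then Ms j else {})"
definition "M1 r s A Ms j = (\<Union>l\<in>{..r}. image (p1 r s A l) ` MM1 r Ms l j)"
definition "G2 r s A Lr j q = (if q < r * s \<and> q mod s = 0 then Lr j (q div s) else if r * s + r * A \<le> q then Lr j (r + (q - (r * s + r * A))) else idg)"
definition "M2 r s A Mr j = image (pA r s A) ` Mr j"
definition "Lg D r s A Ls Lr j = (if j \<le> D then G1 r s A Ls j else G2 r s A Lr (j - Suc D))"
definition "Mg D r s A Ms Mr j = (if j \<le> D then M1 r s A Ms j else if j = Suc D then {} else M2 r s A Mr (j - Suc D))"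

lemma lt_blk: "(l::nat) < r \<Longrightarrow> i < s \<Longrightarrow> l * s + i < r * s"
proof -
  assume "l < r" "i < s"
  then have "l * s + i < Suc l * s" by simp
  also have "\<dots> \<le> r * s" using \<open>l < r\<close> by (intro mult_le_mono1) simp
  finally show ?thesis .
qed

lemma div_blk: "i < (s::nat) \<Longrightarrow> (l * s + i) div s = l" by simp
lemma mod_blk: "i < (s::nat) \<Longrightarrow> (l * s + i) mod s = i" by simp

locale constr =
  fixes D D0 r s A B :: nat and Ls Lr :: "nat \<Rightarrow> nat \<Rightarrow> bool \<Rightarrow> bool \<Rightarrow> complex" and Ms Mr :: "nat \<Rightarrow> nat set set"
  assumes vF: "valid_circuit D (s + A) Ls Ms" and vB: "valid_circuit D0 (r + B) Lr Mr"
  and r1: "1 \<le> r" and s1: "1 \<le> s"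
begin

abbreviation "mq \<equiv> r * s + r * A + B"

lemma blocks1: "blocks mq {..r} (mm1 r s A B) (p1 r s A)"
proof
  show "finite {..r}" by simp
next
  fix l i i' assume l: "l \<in> {..r}" and i: "i < mm1 r s A B l" "i' < mm1 r s A B l" and e: "p1 r s A l i = p1 r s A l i'"
  show "i = i'"
  proof (cases "l < r")
    case True
    have a: "l * s + i < r * s" if "i < s" for i using lt_blk[OF True that] .
    show ?thesis using e i True a[of i] a[of i'] by (auto simp: p1_def mm1_def split: if_splits)
  next
    case False then show ?thesis using e by (auto simp: p1_def)
  qed
next
  fix l i assume l: "l \<in> {..r}" and i: "i < mm1 r s A B l"
  show "p1 r s A l i < mq"
  proof (cases "l < r")
    case True
    show ?thesis
    proof (cases "i < s")
      case True then show ?thesis using lt_blk[OF \<open>l < r\<close> True] by (simp add: p1_def \<open>l < r\<close>)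
    next
      case False
      then have "l * A + (i - s) < r * A" using lt_blk[OF \<open>l < r\<close>, of "i - s" A] i True by (simp add: mm1_def)
      then show ?thesis using False True by (simp add: p1_def)
    qed
  next
    case False then show ?thesis using i by (simp add: p1_def mm1_def)
  qed
next
  fix l l' i i' assume l: "l \<in> {..r}" "l' \<in> {..r}" and i: "i < mm1 r s A B l" "i' < mm1 r s A B l'"
    and e: "p1 r s A l i = p1 r s A l' i'"
  have in1: "l * s + i < r * s" if "l < r" "i < s" for l i using lt_blk that .
  have in2: "l * A + i < r * A" if "l < r" "i < A" for l i using lt_blk that .
  show "l = l'"
  proof (cases "l < r")
    case True
    note lr = True
    show ?thesis
    proof (cases "l' < r")
      case True
      note lr' = True
      show ?thesis
      proof (cases "i < s")
        case True
        show ?thesis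
        proof (cases "i' < s")
          case True
          then have "l * s + i = l' * s + i'" using e lr lr' \<open>i < s\<close> by (simp add: p1_def)
          then have "(l * s + i) div s = (l' * s + i') div s" by simp
          then show ?thesis using \<open>i < s\<close> True by simp
        next
          case False
          then show ?thesis using e lr lr' \<open>i < s\<close> in1[OF lr \<open>i < s\<close>] by (simp add: p1_def)
        qed
      next
        case False
        note ns = False
        show ?thesis
        proof (cases "i' < s")
          case True
          then show ?thesis using e lr lr' ns in1[OF lr' True] by (simp add: p1_def)
        next
          case False
          then have "l * A + (i - s) = l' * A + (i' - s)" using e lr lr' ns by (simp add: p1_def)
          then have "(l * A + (i - s)) div A = (l' * A + (i' - s)) div A" by simp
          moreover have "i - s < A" "i' - s < A" using i lr lr' ns False by (auto simp: mm1_def)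
          ultimately show ?thesis by simp
        qed
      qed
    next
      case False
      then have "l' = r" using l by simp
      have "p1 r s A l i < r * s + r * A"
      proof (cases "i < s")
        case True then show ?thesis using in1[OF lr True] lr by (simp add: p1_def)
      next
        case False
        then have "i - s < A" using i lr by (simp add: mm1_def)
        then show ?thesis using in2[OF lr \<open>i - s < A\<close>] lr False by (simp add: p1_def)
      qed
      then show ?thesis using e \<open>l' = r\<close> by (simp add: p1_def)
    qed
  next
    case False
    then have lr: "l = r" using l by simp
    show ?thesis
    proof (cases "l' < r")
      case True
      note lr' = True
      have "p1 r s A l' i' < r * s + r * A"
      proof (cases "i' < s")
        case True then show ?thesis using in1[OF lr' True] lr' by (simp add: p1_def)
      next
        case False
        then have "i' - s < A" using i lr' by (simp add: mm1_def)
        then show ?thesis using in2[OF lr' \<open>i' - s < A\<close>] lr' False by (simp add: p1_def)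
      qed
      then show ?thesis using e lr by (simp add: p1_def)
    next
      case False then show ?thesis using l lr by simp
    qed
  qed
next
  fix q assume q: "q < mq"
  show "\<exists>l\<in>{..r}. \<exists>i<mm1 r s A B l. p1 r s A l i = q"
  proof (cases "q < r * s")
    case True
    have s0: "0 < s" using s1 by simp
    have "q div s < r" using True by (simp add: div_less_iff_less_mult s0)
    moreover have "q mod s < s" using s0 by simp
    moreover have "(q div s) * s + q mod s = q" by simp
    ultimately show ?thesis by (intro bexI[of _ "q div s"] exI[of _ "q mod s"]) (auto simp: p1_def mm1_def)
  next
    case False
    note nrs = False
    show ?thesis
    proof (cases "q < r * s + r * A")
      case True
      then have A0: "0 < A" using False by (cases A) auto
      have "(q - r * s) div A < r" using True False by (simp add: div_less_iff_less_mult A0)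
      moreover have "(q - r * s) mod A < A" using A0 by simp
      moreover have "r * s + ((q - r * s) div A) * A + (q - r * s) mod A = q" using False by simp
      ultimately show ?thesis
        by (intro bexI[of _ "(q - r * s) div A"] exI[of _ "s + (q - r * s) mod A"]) (auto simp: p1_def mm1_def)
    next
      case False
      then show ?thesis using q nrs
        by (intro bexI[of _ r] exI[of _ "q - (r * s + r * A)"]) (auto simp: p1_def mm1_def)
    qed
  qed
qed

definition "Rset = {..<mq} - pA r s A ` {..<r + B}"
definition "hR = (SOME h. bij_betw h {..<card Rset} Rset)"

lemma hR_bij: "bij_betw hR {..<card Rset} Rset"
proof -
  have "\<exists>h. bij_betw h {..<card Rset} Rset"
    using ex_bij_betw_nat_finite[of Rset] by (auto simp: Rset_def atLeast0LessThan)
  then show ?thesis unfolding hR_def by (rule someI_ex)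
qed

lemma pA_lt: "i < r + B \<Longrightarrow> pA r s A i < mq"
proof (cases "i < r")
  case True
  have "i * s < r * s" using True s1 by simp
  moreover have "r * s \<le> mq" by simp
  moreover have "pA r s A i = i * s" using True by (simp add: pA_def)
  ultimately show ?thesis by linarith
qed (auto simp: pA_def)

lemma pA_inj: "i < r + B \<Longrightarrow> i' < r + B \<Longrightarrow> pA r s A i = pA r s A i' \<Longrightarrow> i = i'"
proof -
  assume i: "i < r + B" "i' < r + B" and e: "pA r s A i = pA r s A i'"
  have a: "k * s < r * s" if "k < r" for k using that s1 by simp
  show "i = i'"
  proof (cases "i < r")
    case True
    show ?thesis
    proof (cases "i' < r")
      case True then show ?thesis using e \<open>i < r\<close> s1 by (simp add: pA_def)
    next
      case False
      have "pA r s A i' = r * s + r * A + (i' - r)" "pA r s A i = i * s" using \<open>i < r\<close> False by (auto simp: pA_def)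
      then show ?thesis using e a[OF \<open>i < r\<close>] by linarith
    qed
  next
    case False
    show ?thesis
    proof (cases "i' < r")
      case True
      have "pA r s A i = r * s + r * A + (i - r)" "pA r s A i' = i' * s" using True False by (auto simp: pA_def)
      then show ?thesis using e a[OF True] by linarith
    next
      case False then show ?thesis using e \<open>\<not> i < r\<close> by (simp add: pA_def)
    qed
  qed
qed

lemma blocks2: "blocks mq {0,1::nat} (\<lambda>l. if l = 0 then r + B else card Rset) (\<lambda>l. if l = 0 then pA r s A else hR)"
proof
  show "finite {0, 1::nat}" by simp
next
  fix l i i' assume "l \<in> {0,1::nat}" "i < (if l = 0 then r + B else card Rset)" "i' < (if l = 0 then r + B else card Rset)"
    "(if l = 0 then pA r s A else hR) i = (if l = 0 then pA r s A else hR) i'"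
  then show "i = i'" using pA_inj hR_bij by (auto simp: bij_betw_def inj_on_def split: if_splits)
next
  fix l i assume "l \<in> {0,1::nat}" "i < (if l = 0 then r + B else card Rset)"
  then show "(if l = 0 then pA r s A else hR) i < mq"
    using pA_lt hR_bij by (auto simp: bij_betw_def Rset_def split: if_splits)
next
  fix l l' i i' assume "l \<in> {0,1::nat}" "l' \<in> {0,1::nat}" "i < (if l = 0 then r + B else card Rset)"
    "i' < (if l' = 0 then r + B else card Rset)"
    "(if l = 0 then pA r s A else hR) i = (if l' = 0 then pA r s A else hR) i'"
  then show "l = l'" using hR_bij by (auto simp: bij_betw_def Rset_def split: if_splits)
next
  fix q assume q: "q < mq"
  show "\<exists>l\<in>{0,1::nat}. \<exists>i<(if l = 0 then r + B else card Rset). (if l = 0 then pA r s A else hR) i = q"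
  proof (cases "q \<in> pA r s A ` {..<r + B}")
    case True then show ?thesis by auto
  next
    case False
    then have "q \<in> Rset" using q by (simp add: Rset_def)
    then have "q \<in> hR ` {..<card Rset}" using hR_bij by (simp add: bij_betw_def)
    then obtain i where "i < card Rset" "hR i = q" by auto
    then show ?thesis by (intro bexI[of _ 1]) auto
  qed
qed

end

lemma (in blocks) valid_union:
  assumes "\<And>l. l \<in> I \<Longrightarrow> valid_cz_layer (mm l) (S l)"
  shows "valid_cz_layer m (\<Union>l\<in>I. image (p l) ` S l)"
  unfolding valid_cz_layer_def
proof (intro conjI ballI impI)
  fix t assume "t \<in> (\<Union>l\<in>I. image (p l) ` S l)"
  then obtain l a where l: "l \<in> I" "a \<in> S l" "t = p l ` a" by auto
  then show "t \<noteq> {}" using assms[OF l(1)] by (auto simp: valid_cz_layer_def)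
  show "t \<subseteq> {..<m}" using l assms[OF l(1)] rng by (fastforce simp: valid_cz_layer_def)
next
  fix t t' assume t: "t \<in> (\<Union>l\<in>I. image (p l) ` S l)" "t' \<in> (\<Union>l\<in>I. image (p l) ` S l)" "t \<noteq> t'"
  obtain l a where l: "l \<in> I" "a \<in> S l" "t = p l ` a" using t(1) by auto
  obtain l' a' where l': "l' \<in> I" "a' \<in> S l'" "t' = p l' ` a'" using t(2) by auto
  show "t \<inter> t' = {}"
  proof (rule ccontr)
    assume "t \<inter> t' \<noteq> {}"
    then obtain i i' where ii: "i \<in> a" "i' \<in> a'" "p l i = p l' i'" using l l' by auto
    have ia: "i < mm l" using assms[OF l(1)] l(2) ii(1) by (auto simp: valid_cz_layer_def)
    have ia': "i' < mm l'" using assms[OF l'(1)] l'(2) ii(2) by (auto simp: valid_cz_layer_def)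
    have "l = l'" using disj[OF l(1) l'(1) ia ia' ii(3)] .
    then have "i = i'" using injp[OF l(1) ia] ia' ii(3) by auto
    then have "a = a'" using assms[OF l(1)] l(2) l'(2) ii \<open>l = l'\<close> by (auto simp: valid_cz_layer_def)
    then show False using t(3) l l' \<open>l = l'\<close> by simp
  qed
qed

context constr begin

lemma valid_empty: "valid_cz_layer k {}" by (simp add: valid_cz_layer_def)

lemma valid_global: "valid_circuit (Suc D + D0) mq (Lg D r s A Ls Lr) (Mg D r s A Ms Mr)"
  unfolding valid_circuit_def
proof (intro conjI allI impI ballI)
  fix j i assume j: "j \<le> Suc D + D0" and i: "i < mq"
  have UF: "\<And>j i. j \<le> D \<Longrightarrow> i < s + A \<Longrightarrow> unitary2 (Ls j i)" using vF by (auto simp: valid_circuit_def)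
  have UB: "\<And>j i. j \<le> D0 \<Longrightarrow> i < r + B \<Longrightarrow> unitary2 (Lr j i)" using vB by (auto simp: valid_circuit_def)
  show "unitary2 (Lg D r s A Ls Lr j i)"
  proof (cases "j \<le> D")
    case True
    have s0: "0 < s" using s1 by simp
    show ?thesis
    proof (cases "i < r * s")
      case True
      have "i mod s < s + A" using mod_less_divisor[OF s0, of i] by linarith
      then show ?thesis using UF[OF \<open>j \<le> D\<close>, of "i mod s"] True \<open>j \<le> D\<close> by (simp add: Lg_def G1_def)
    next
      case False
      note nrs = False
      show ?thesis
      proof (cases "i < r * s + r * A")
        case True
        then have A0: "0 < A" using False by (cases A) auto
        then show ?thesis using UF[OF \<open>j \<le> D\<close>, of "s + (i - r * s) mod A"] \<open>j \<le> D\<close> nrs True by (simp add: Lg_def G1_def)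
      qed (simp add: Lg_def G1_def \<open>j \<le> D\<close> nrs unitary_idg)
    qed
  next
    case False
    then have j': "j - Suc D \<le> D0" using j by simp
    show ?thesis
    proof (cases "i < r * s \<and> i mod s = 0")
      case True
      then have "i div s < r" using s1 by (simp add: div_less_iff_less_mult)
      then show ?thesis using UB[OF j', of "i div s"] True False by (simp add: Lg_def G2_def)
    next
      case nt: False
      show ?thesis
      proof (cases "r * s + r * A \<le> i")
        case True
        then show ?thesis using UB[OF j', of "r + (i - (r * s + r * A))"] nt False i by (simp add: Lg_def G2_def)
      qed (simp add: Lg_def G2_def False nt unitary_idg)
    qed
  qed
next
  fix j assume j: "j \<in> {1..Suc D + D0}"
  show "valid_cz_layer mq (Mg D r s A Ms Mr j)"
  proof (cases "j \<le> D")
    case True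
    have "valid_cz_layer mq (\<Union>l\<in>{..r}. image (p1 r s A l) ` MM1 r Ms l j)"
    proof (rule blocks.valid_union[OF blocks1])
      fix l assume "l \<in> {..r}"
      show "valid_cz_layer (mm1 r s A B l) (MM1 r Ms l j)"
        using vF j True by (auto simp: valid_circuit_def MM1_def mm1_def valid_empty)
    qed
    then show ?thesis using True by (simp add: Mg_def M1_def)
  next
    case False
    note nD = False
    show ?thesis
    proof (cases "j = Suc D")
      case True then show ?thesis by (simp add: Mg_def valid_empty)
    next
      case False
      have "valid_cz_layer mq (\<Union>l\<in>{0,1::nat}. image ((\<lambda>l. if l = 0 then pA r s A else hR) l) ` (if l = 0 then Mr (j - Suc D) else {}))"
      proof (rule blocks.valid_union[OF blocks2])
        fix l :: nat assume "l \<in> {0,1}"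
        show "valid_cz_layer (if l = 0 then r + B else card Rset) (if l = 0 then Mr (j - Suc D) else {})"
        proof -
          have "j - Suc D \<in> {1..D0}" using j nD False by auto
          then show ?thesis using vB by (auto simp: valid_circuit_def valid_empty)
        qed
      qed
      then show ?thesis using nD False by (simp add: Mg_def M2_def)
    qed
  qed
qed

end


lemma (in blocks) glue_cong: "(\<And>l. l \<in> I \<Longrightarrow> G l = G' l) \<Longrightarrow> glue G = glue G'"
  unfolding glue_def using own by (auto intro!: ext)

lemma parity_cong: "(\<And>i. i < n \<Longrightarrow> f i = g i) \<Longrightarrow> parity n f = parity n g"
  unfolding parity_def by (metis (mono_tags, lifting) Collect_cong)

locale constr_in = constr +
  fixes n :: nat and x :: "nat \<Rightarrow> bool"
  assumes nrs: "n \<le> r * s"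
begin

interpretation b1: blocks mq "{..r}" "mm1 r s A B" "p1 r s A" by (rule blocks1)

definition "xb l = restrict (\<lambda>i. l * s + i < n \<and> x (l * s + i)) {..<s}"
definition "zb = (\<lambda>z. if z = restrict (\<lambda>_. False) {..<B} then 1 else (0::complex))"
definition "phi l = (if l < r then input_state s (s + A) (xb l) else zb)"
definition "LL l = (if l < r then Ls else (\<lambda>_ _. idg))"
definition "Rl l = run_circuit (mm1 r s A B l) (LL l) (MM1 r Ms l) D (phi l)"
definition "Phi = run_circuit mq (G1 r s A Ls) (M1 r s A Ms) D (input_state n mq x)"

lemma s0: "0 < s" using s1 by simp

lemma p1_in: "l < r \<Longrightarrow> i < s \<Longrightarrow> p1 r s A l i = l * s + i" by (simp add: p1_def)
lemma p1_anc: "l < r \<Longrightarrow> \<not> i < s \<Longrightarrow> p1 r s A l i = r * s + l * A + (i - s)" by (simp add: p1_def)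
lemma p1_rest: "p1 r s A r i = r * s + r * A + i" by (simp add: p1_def)

lemma input_prod: "y \<in> bits mq \<Longrightarrow> input_state n mq x y = (\<Prod>l\<in>{..r}. phi l (pb (p1 r s A l) (mm1 r s A B l) y))"
proof -
  assume y: "y \<in> bits mq"
  define T where "T = restrict (\<lambda>i. i < n \<and> x i) {..<mq}"
  have T: "T \<in> bits mq" unfolding T_def by (rule restrict_bits)
  have phiT: "phi l z = (if z = pb (p1 r s A l) (mm1 r s A B l) T then 1 else 0)" if l: "l \<in> {..r}" for l z
  proof (cases "l < r")
    case True
    have "restrict (\<lambda>i. i < s \<and> xb l i) {..<s + A} = pb (p1 r s A l) (mm1 r s A B l) T"
    proof (rule ext)
      fix i
      show "restrict (\<lambda>i. i < s \<and> xb l i) {..<s + A} i = pb (p1 r s A l) (mm1 r s A B l) T i"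
      proof (cases "i < s")
        case True
        then show ?thesis using lt_blk[OF \<open>l < r\<close> True] \<open>l < r\<close> nrs
          by (simp add: pb_def T_def xb_def mm1_def p1_in)
      next
        case False
        show ?thesis
        proof (cases "i < s + A")
          case True
          have q1: "r * s \<le> p1 r s A l i" using p1_anc[OF \<open>l < r\<close> False] by simp
          have q2: "p1 r s A l i < mq" using b1.rng[OF l] True \<open>l < r\<close> by (simp add: mm1_def)
          have "T (p1 r s A l i) = False" using q1 q2 nrs by (simp add: T_def)
          then show ?thesis using True False \<open>l < r\<close> by (simp add: pb_def mm1_def)
        next
          case False
          then show ?thesis using \<open>l < r\<close> by (simp add: pb_def mm1_def)
        qed
      qed
    qed
    then show ?thesis using True by (simp add: phi_def input_state_def)
  next
    case False
    then have lr: "l = r" using l by simp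
    have "restrict (\<lambda>_. False) {..<B} = pb (p1 r s A l) (mm1 r s A B l) T"
      by (rule ext) (use nrs lr in \<open>simp add: pb_def T_def mm1_def p1_rest\<close>)
    then show ?thesis using lr by (simp add: phi_def zb_def)
  qed
  have "(\<Prod>l\<in>{..r}. phi l (pb (p1 r s A l) (mm1 r s A B l) y))
      = (\<Prod>l\<in>{..r}. if pb (p1 r s A l) (mm1 r s A B l) y = pb (p1 r s A l) (mm1 r s A B l) T then 1 else 0)"
    by (rule prod.cong[OF refl]) (simp add: phiT)
  also have "\<dots> = (if \<forall>l\<in>{..r}. pb (p1 r s A l) (mm1 r s A B l) y = pb (p1 r s A l) (mm1 r s A B l) T then 1 else 0)"
    by (rule prod_ind_gen) simp
  also have "\<dots> = (if y = T then 1 else 0)" using b1.pb_eq_iff[OF y T] by simp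
  also have "\<dots> = input_state n mq x y" by (simp add: input_state_def T_def)
  finally show ?thesis by simp
qed

lemma G1_p1: "l \<in> {..r} \<Longrightarrow> i < mm1 r s A B l \<Longrightarrow> G1 r s A Ls j (p1 r s A l i) = LL l j i"
proof -
  assume l: "l \<in> {..r}" and i: "i < mm1 r s A B l"
  show ?thesis
  proof (cases "l < r")
    case True
    show ?thesis
    proof (cases "i < s")
      case True
      then show ?thesis using lt_blk[OF \<open>l < r\<close> True] \<open>l < r\<close> by (simp add: G1_def p1_in LL_def)
    next
      case False
      have ia: "i - s < A" using i False True by (simp add: mm1_def)
      have "l * A + (i - s) < r * A" using lt_blk[OF True ia] .
      then have q1: "\<not> p1 r s A l i < r * s" "p1 r s A l i < r * s + r * A"
        using p1_anc[OF True False] by auto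
      have "(p1 r s A l i - r * s) mod A = i - s" using p1_anc[OF True False] ia by simp
      then have "s + (p1 r s A l i - r * s) mod A = i" using False by simp
      then show ?thesis using q1 True by (simp add: G1_def LL_def)
    qed
  next
    case False then have "l = r" using l by simp
    then show ?thesis by (simp add: G1_def p1_rest LL_def)
  qed
qed

lemma MM1_valid: "1 \<le> j \<Longrightarrow> j \<le> D \<Longrightarrow> l \<in> {..r} \<Longrightarrow> \<forall>t\<in>MM1 r Ms l j. t \<noteq> {} \<and> t \<subseteq> {..<mm1 r s A B l}"
  using vF by (auto simp: MM1_def mm1_def valid_circuit_def valid_cz_layer_def)

lemma Phi_prod: "Phi y = (\<Prod>l\<in>{..r}. Rl l (pb (p1 r s A l) (mm1 r s A B l) y))"
  unfolding Phi_def Rl_def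
  by (rule b1.run_prod) (auto simp: G1_p1 M1_def MM1_valid input_prod)

lemma LL_unitary: "l \<in> {..r} \<Longrightarrow> \<forall>j\<le>D. \<forall>i<mm1 r s A B l. unitary2 (LL l j i)"
  using vF by (auto simp: LL_def mm1_def valid_circuit_def unitary_idg)

lemma nrm_phi: "l \<in> {..r} \<Longrightarrow> nrm (mm1 r s A B l) (phi l) = 1"
  by (auto simp: phi_def mm1_def nrm_input zb_def intro!: nrm_basis restrict_bits)

lemma nrm_Rl: "l \<in> {..r} \<Longrightarrow> nrm (mm1 r s A B l) (Rl l) = 1"
  unfolding Rl_def using run_norm[OF LL_unitary] nrm_phi by simp

lemma Lg_low: "j \<le> D \<Longrightarrow> Lg D r s A Ls Lr j = G1 r s A Ls j" by (simp add: Lg_def)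
lemma Mg_low: "j \<le> D \<Longrightarrow> Mg D r s A Ms Mr j = M1 r s A Ms j" by (simp add: Mg_def)

lemma Phi_global: "run_circuit mq (Lg D r s A Ls Lr) (Mg D r s A Ms Mr) D (input_state n mq x) = Phi"
  unfolding Phi_def by (rule run_cong) (auto simp: Lg_low Mg_low)

lemma final_eq: "run_circuit mq (Lg D r s A Ls Lr) (Mg D r s A Ms Mr) (Suc D + D0) (input_state n mq x)
   = run_circuit mq (G2 r s A Lr) (M2 r s A Mr) D0 Phi"
proof -
  have "run_circuit mq (Lg D r s A Ls Lr) (Mg D r s A Ms Mr) (Suc D + D0) (input_state n mq x)
     = run_circuit mq (\<lambda>j. Lg D r s A Ls Lr (Suc D + j)) (\<lambda>j. Mg D r s A Ms Mr (Suc D + j)) D0 Phi"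
    by (subst run_seq) (simp_all add: Mg_def Phi_global)
  also have "\<dots> = run_circuit mq (G2 r s A Lr) (M2 r s A Mr) D0 Phi"
    by (rule run_cong) (auto simp: Lg_def Mg_def)
  finally show ?thesis .
qed

lemma global_unitary: "\<forall>j\<le>Suc D + D0. \<forall>i<mq. unitary2 (Lg D r s A Ls Lr j i)"
  using valid_global by (simp add: valid_circuit_def)

lemma nrm_Phi: "nrm mq Phi = 1"
proof -
  have "nrm mq Phi = nrm mq (input_state n mq x)"
    unfolding Phi_global[symmetric] by (rule run_norm) (use global_unitary in auto)
  then show ?thesis by (simp add: nrm_input)
qed

lemma G2_unitary: "\<forall>j\<le>D0. \<forall>i<mq. unitary2 (G2 r s A Lr j i)"
proof (intro allI impI)
  fix j i assume "j \<le> D0" "i < mq"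
  then have "unitary2 (Lg D r s A Ls Lr (Suc D + j) i)" using global_unitary by simp
  then show "unitary2 (G2 r s A Lr j i)" by (simp add: Lg_def)
qed

end


context constr_in begin

interpretation b1: blocks mq "{..r}" "mm1 r s A B" "p1 r s A" by (rule blocks1)

definition "pv = restrict (\<lambda>l. parity s (xb l)) {..<r}"
definition "good = (\<lambda>y. if \<forall>l<r. y (l * s) = pv l then Phi y else 0)"
definition "bad = (\<lambda>y. Phi y - good y)"

lemma Rl_low: "l < r \<Longrightarrow> Rl l = run_circuit (s + A) Ls Ms D (input_state s (s + A) (xb l))"
proof -
  assume l: "l < r"
  have "MM1 r Ms l = Ms" using l by (auto simp: MM1_def)
  then show ?thesis using l by (simp add: Rl_def mm1_def LL_def phi_def)
qed

lemma xb_bits: "xb l \<in> bits s" unfolding xb_def by (rule restrict_bits)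

lemma block_wrong:
  assumes l0: "l0 < r"
  shows "(\<Sum>y\<in>bits mq. if y (l0 * s) \<noteq> pv l0 then (cmod (Phi y))\<^sup>2 else 0)
       = parity_error D (s + A) Ls Ms s (xb l0)"
proof -
  let ?pb = "\<lambda>l y. pb (p1 r s A l) (mm1 r s A B l) y"
  define g where "g = (\<lambda>l z. if l = l0 then (if z 0 \<noteq> pv l0 then (cmod (Rl l z))\<^sup>2 else 0) else (cmod (Rl l z))\<^sup>2)"
  have "(\<Sum>y\<in>bits mq. if y (l0 * s) \<noteq> pv l0 then (cmod (Phi y))\<^sup>2 else 0) = (\<Sum>y\<in>bits mq. \<Prod>l\<in>{..r}. g l (?pb l y))"
  proof (rule sum.cong[OF refl])
    fix y assume y: "y \<in> bits mq"
    have e0: "?pb l0 y 0 = y (l0 * s)" using l0 s1 by (simp add: pb_def mm1_def p1_in)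
    have "(\<Prod>l\<in>{..r}. g l (?pb l y)) = (\<Prod>l\<in>{..r}. (if l = l0 then (if y (l0 * s) \<noteq> pv l0 then 1 else 0) else 1) * (cmod (Rl l (?pb l y)))\<^sup>2)"
      by (rule prod.cong[OF refl]) (auto simp: g_def e0)
    also have "\<dots> = (if y (l0 * s) \<noteq> pv l0 then 1 else 0) * (\<Prod>l\<in>{..r}. (cmod (Rl l (?pb l y)))\<^sup>2)"
      using l0 by (simp add: prod.distrib)
    also have "(\<Prod>l\<in>{..r}. (cmod (Rl l (?pb l y)))\<^sup>2) = (cmod (Phi y))\<^sup>2"
      by (simp add: Phi_prod prod_norm prod_power_distrib[symmetric])
    finally show "(if y (l0 * s) \<noteq> pv l0 then (cmod (Phi y))\<^sup>2 else 0) = (\<Prod>l\<in>{..r}. g l (?pb l y))" by simp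
  qed
  also have "\<dots> = (\<Prod>l\<in>{..r}. \<Sum>z\<in>bits (mm1 r s A B l). g l z)" by (rule b1.sum_prod)
  also have "\<dots> = (\<Prod>l\<in>{..r}. if l = l0 then (\<Sum>z\<in>bits (s + A). if z 0 \<noteq> pv l0 then (cmod (Rl l0 z))\<^sup>2 else 0) else 1)"
  proof (rule prod.cong[OF refl])
    fix l assume l: "l \<in> {..r}"
    show "(\<Sum>z\<in>bits (mm1 r s A B l). g l z) = (if l = l0 then (\<Sum>z\<in>bits (s + A). if z 0 \<noteq> pv l0 then (cmod (Rl l0 z))\<^sup>2 else 0) else 1)"
    proof (cases "l = l0")
      case True then show ?thesis using l0 by (simp add: g_def mm1_def)
    next
      case False then show ?thesis using nrm_Rl[OF l] by (simp add: g_def nrm_def)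
    qed
  qed
  also have "\<dots> = (\<Sum>z\<in>bits (s + A). if z 0 \<noteq> pv l0 then (cmod (Rl l0 z))\<^sup>2 else 0)"
    using l0 by simp
  also have "\<dots> = (\<Sum>z\<in>{z\<in>bits (s + A). z 0 \<noteq> parity s (xb l0)}. (cmod (Rl l0 z))\<^sup>2)"
    using l0 by (simp add: sum.inter_filter pv_def)
  also have "\<dots> = parity_error D (s + A) Ls Ms s (xb l0)"
    unfolding Rl_low[OF l0] using vF s1 by (subst perr) (auto simp: valid_circuit_def)
  finally show ?thesis .
qed

lemma bad_bound:
  fixes eF :: real
  assumes eF: "\<forall>x'\<in>bits s. parity_error D (s + A) Ls Ms s x' \<le> eF"
  shows "nrm mq bad \<le> r * eF"
proof -
  have pw: "(cmod (bad y))\<^sup>2 \<le> (\<Sum>l<r. if y (l * s) \<noteq> pv l then (cmod (Phi y))\<^sup>2 else 0)" for y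
  proof (cases "\<forall>l<r. y (l * s) = pv l")
    case True then show ?thesis by (simp add: bad_def good_def sum_nonneg)
  next
    case False
    then obtain l0 where l0: "l0 < r" "y (l0 * s) \<noteq> pv l0" by auto
    have "(cmod (bad y))\<^sup>2 = (if y (l0 * s) \<noteq> pv l0 then (cmod (Phi y))\<^sup>2 else 0)"
      using l0 by (auto simp: bad_def good_def)
    also have "\<dots> \<le> (\<Sum>l<r. if y (l * s) \<noteq> pv l then (cmod (Phi y))\<^sup>2 else 0)"
      by (rule member_le_sum[where f="\<lambda>l. if y (l * s) \<noteq> pv l then (cmod (Phi y))\<^sup>2 else 0"]) (use l0 in auto)
    finally show ?thesis .
  qed
  have "nrm mq bad \<le> (\<Sum>y\<in>bits mq. \<Sum>l<r. if y (l * s) \<noteq> pv l then (cmod (Phi y))\<^sup>2 else 0)"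
    unfolding nrm_def by (rule sum_mono) (rule pw)
  also have "\<dots> = (\<Sum>l<r. \<Sum>y\<in>bits mq. if y (l * s) \<noteq> pv l then (cmod (Phi y))\<^sup>2 else 0)"
    by (rule sum.swap)
  also have "\<dots> = (\<Sum>l<r. parity_error D (s + A) Ls Ms s (xb l))"
    by (rule sum.cong[OF refl]) (rule block_wrong, simp)
  also have "\<dots> \<le> (\<Sum>l<r. eF)" by (rule sum_mono) (use eF xb_bits in auto)
  finally show ?thesis by simp
qed

end


context constr_in begin

interpretation b1: blocks mq "{..r}" "mm1 r s A B" "p1 r s A" by (rule blocks1)

definition "mm2 = (\<lambda>l::nat. if l = 0 then r + B else card Rset)"
definition "p2 = (\<lambda>l::nat. if l = 0 then pA r s A else hR)"

lemma blocks2': "blocks mq {0,1} mm2 p2" unfolding mm2_def p2_def by (rule blocks2)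

interpretation b2: blocks mq "{0,1}" mm2 p2 by (rule blocks2')

definition "tA = restrict (\<lambda>i. i < r \<and> pv i) {..<r + B}"
definition "Gf = (\<lambda>w. good (b2.glue (\<lambda>l. if l = 0 then tA else w)))"
definition "phi2 = (\<lambda>l::nat. if l = 0 then input_state r (r + B) pv else Gf)"
definition "V = run_circuit mq (G2 r s A Lr) (M2 r s A Mr) D0"
definition "W = run_circuit (r + B) Lr Mr D0 (input_state r (r + B) pv)"

lemma r0: "0 < r" using r1 by simp

lemma pA0: "pA r s A 0 = 0" using r0 by (simp add: pA_def)

lemma pA_anc: "\<not> i < r \<Longrightarrow> pA r s A i = r * s + r * A + (i - r)" by (simp add: pA_def)

lemma Phi_anc_zero:
  assumes y: "y \<in> bits mq" and i: "\<not> i < r" "i < r + B" and yi: "y (pA r s A i)"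
  shows "Phi y = 0"
proof -
  have ib: "i - r < B" using i by simp
  have "Rl r (pb (p1 r s A r) (mm1 r s A B r) y) = 0"
  proof -
    have Rz: "Rl r (pb (p1 r s A r) (mm1 r s A B r) y) = zb (pb (p1 r s A r) (mm1 r s A B r) y)"
    proof -
      have "MM1 r Ms r = (\<lambda>_. {})" by (auto simp: MM1_def)
      then show ?thesis unfolding Rl_def by (simp add: LL_def mm1_def phi_def run_idg)
    qed
    have "pb (p1 r s A r) (mm1 r s A B r) y (i - r) = True"
    proof -
      have "i - r < B" using i by simp
      then show ?thesis using i yi by (simp add: pb_def mm1_def p1_rest pA_anc)
    qed
    moreover have "restrict (\<lambda>_. False) {..<B} (i - r) = False" using ib by simp
    ultimately have "pb (p1 r s A r) (mm1 r s A B r) y \<noteq> restrict (\<lambda>_. False) {..<B}"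
      by metis
    then show ?thesis by (simp add: zb_def Rz)
  qed
  then show ?thesis unfolding Phi_prod by (intro prod_zero) auto
qed

lemma good_prod: "y \<in> bits mq \<Longrightarrow> good y = (\<Prod>l\<in>{0,1}. phi2 l (pb (p2 l) (mm2 l) y))"
proof -
  assume y: "y \<in> bits mq"
  have prodeq: "(\<Prod>l\<in>{0,1}. phi2 l (pb (p2 l) (mm2 l) y))
      = input_state r (r + B) pv (pb (pA r s A) (r + B) y) * Gf (pb hR (card Rset) y)"
    by (simp add: phi2_def p2_def mm2_def)
  show ?thesis
  proof (cases "pb (pA r s A) (r + B) y = tA")
    case True
    have "b2.glue (\<lambda>l. if l = 0 then tA else pb hR (card Rset) y) = b2.glue (\<lambda>l. pb (p2 l) (mm2 l) y)"
      by (rule b2.glue_cong) (auto simp: True p2_def mm2_def)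
    also have "\<dots> = y" by (rule b2.glue_pb[OF y])
    finally have "Gf (pb hR (card Rset) y) = good y" by (simp add: Gf_def)
    moreover have "input_state r (r + B) pv (pb (pA r s A) (r + B) y) = 1"
      using True by (simp add: input_state_def tA_def)
    ultimately show ?thesis using prodeq by simp
  next
    case False
    have tAb: "tA \<in> bits (r + B)" unfolding tA_def by (rule restrict_bits)
    obtain i where i: "i < r + B" "pb (pA r s A) (r + B) y i \<noteq> tA i"
      using False bits_eqI[OF pb_bits tAb] by blast
    have inp: "input_state r (r + B) pv (pb (pA r s A) (r + B) y) = 0"
      using False by (simp add: input_state_def tA_def)
    have "good y = 0"
    proof (cases "i < r")
      case True
      then have "y (i * s) \<noteq> pv i" using i by (simp add: pb_def tA_def pA_def)
      then show ?thesis using True by (auto simp: good_def)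
    next
      case False
      then have "y (pA r s A i)" using i by (simp add: pb_def tA_def)
      then show ?thesis using Phi_anc_zero[OF y False i(1)] by (simp add: good_def)
    qed
    then show ?thesis using prodeq inp by simp
  qed
qed

lemma G2_pA: "i < r + B \<Longrightarrow> G2 r s A Lr j (pA r s A i) = Lr j i"
proof (cases "i < r")
  case True
  have "i * s < r * s" using True s1 by simp
  then show ?thesis using True s1 by (simp add: G2_def pA_def)
next
  case False
  define q where "q = pA r s A i"
  have q: "q = r * s + r * A + (i - r)" using False by (simp add: q_def pA_anc)
  then have "\<not> q < r * s" "r * s + r * A \<le> q" "r + (q - (r * s + r * A)) = i" using False by auto
  then show ?thesis unfolding q_def[symmetric] G2_def by simp
qed

lemma G2_R: "q \<in> Rset \<Longrightarrow> G2 r s A Lr j q = idg"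
proof -
  assume q: "q \<in> Rset"
  then have q1: "q < mq" "q \<notin> pA r s A ` {..<r + B}" by (auto simp: Rset_def)
  have a: "\<not> (q < r * s \<and> q mod s = 0)"
  proof
    assume h: "q < r * s \<and> q mod s = 0"
    then have "q div s < r" using s1 by (simp add: div_less_iff_less_mult)
    moreover have "pA r s A (q div s) = q" using h \<open>q div s < r\<close> div_mult_mod_eq[of q s] by (simp add: pA_def)
    ultimately have "q \<in> pA r s A ` {..<r + B}" by (intro image_eqI[where x="q div s"]) auto
    then show False using q1 by blast
  qed
  have b: "\<not> r * s + r * A \<le> q"
  proof
    assume h: "r * s + r * A \<le> q"
    have "pA r s A (r + (q - (r * s + r * A))) = q" using h by (simp add: pA_def)
    moreover have "r + (q - (r * s + r * A)) < r + B" using h q1 by simp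
    ultimately have "q \<in> pA r s A ` {..<r + B}" by (intro image_eqI[where x="r + (q - (r * s + r * A))"]) auto
    then show False using q1 by blast
  qed
  show ?thesis unfolding G2_def by (simp only: if_not_P[OF a] if_not_P[OF b])
qed

lemma Vgood: "V good y = W (pb (pA r s A) (r + B) y) * Gf (pb hR (card Rset) y)"
proof -
  have "V good y = (\<Prod>l\<in>{0,1}. run_circuit (mm2 l) (if l = 0 then Lr else (\<lambda>_ _. idg))
          (if l = 0 then Mr else (\<lambda>_. {})) D0 (phi2 l) (pb (p2 l) (mm2 l) y))"
    unfolding V_def
  proof (rule b2.run_prod)
    fix j l i assume "l \<in> {0,1::nat}" "i < mm2 l"
    then show "G2 r s A Lr j (p2 l i) = (if l = 0 then Lr else (\<lambda>_ _. idg)) j i"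
    proof -
      have hRin: "\<And>i. i < card Rset \<Longrightarrow> hR i \<in> Rset" using hR_bij by (auto simp: bij_betw_def)
      show ?thesis using \<open>l \<in> {0,1}\<close> \<open>i < mm2 l\<close> G2_pA G2_R[OF hRin] by (auto simp: p2_def mm2_def)
    qed
  next
    fix j show "M2 r s A Mr j = (\<Union>l\<in>{0,1}. image (p2 l) ` (if l = 0 then Mr else (\<lambda>_. {})) j)"
      by (simp add: M2_def p2_def)
  next
    fix j l assume "1 \<le> j" "j \<le> D0" "l \<in> {0,1::nat}"
    then show "\<forall>t\<in>(if l = 0 then Mr else (\<lambda>_. {})) j. t \<noteq> {} \<and> t \<subseteq> {..<mm2 l}"
      using vB by (auto simp: valid_circuit_def valid_cz_layer_def mm2_def)
  next
    fix y assume "y \<in> bits mq" then show "good y = (\<Prod>l\<in>{0,1}. phi2 l (pb (p2 l) (mm2 l) y))" by (rule good_prod)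
  qed
  also have "\<dots> = W (pb (pA r s A) (r + B) y) * Gf (pb hR (card Rset) y)"
    by (simp add: mm2_def p2_def phi2_def W_def run_idg)
  finally show ?thesis .
qed

lemma nrm_good_le: "nrm mq good \<le> 1"
proof -
  have "nrm mq good \<le> nrm mq Phi"
    unfolding nrm_def by (rule sum_mono) (simp add: good_def)
  then show ?thesis using nrm_Phi by simp
qed

lemma nrm_Gf: "nrm (card Rset) Gf \<le> 1"
proof -
  have "nrm mq good = (\<Sum>y\<in>bits mq. \<Prod>l\<in>{0,1}. (\<lambda>l z. if l = 0 then (cmod (input_state r (r + B) pv z))\<^sup>2 else (cmod (Gf z))\<^sup>2) l (pb (p2 l) (mm2 l) y))"
    unfolding nrm_def
    by (rule sum.cong[OF refl]) (simp add: good_prod phi2_def p2_def mm2_def norm_mult power_mult_distrib)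
  also have "\<dots> = (\<Prod>l\<in>{0,1}. \<Sum>z\<in>bits (mm2 l). (\<lambda>l z. if l = 0 then (cmod (input_state r (r + B) pv z))\<^sup>2 else (cmod (Gf z))\<^sup>2) l z)"
    by (rule b2.sum_prod)
  also have "\<dots> = nrm (r + B) (input_state r (r + B) pv) * nrm (card Rset) Gf"
    by (simp add: mm2_def nrm_def)
  also have "\<dots> = nrm (card Rset) Gf" by (simp add: nrm_input)
  finally show ?thesis using nrm_good_le by simp
qed

lemma wp_good:
  assumes eB: "parity_error D0 (r + B) Lr Mr r pv \<le> eB"
  shows "(\<Sum>y\<in>bits mq. if y 0 \<noteq> parity r pv then (cmod (V good y))\<^sup>2 else 0) \<le> eB"
proof -
  have "(\<Sum>y\<in>bits mq. if y 0 \<noteq> parity r pv then (cmod (V good y))\<^sup>2 else 0)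
     = (\<Sum>y\<in>bits mq. \<Prod>l\<in>{0,1}. (\<lambda>l z. if l = 0 then (if z 0 \<noteq> parity r pv then (cmod (W z))\<^sup>2 else 0) else (cmod (Gf z))\<^sup>2) l (pb (p2 l) (mm2 l) y))"
  proof (rule sum.cong[OF refl])
    fix y assume y: "y \<in> bits mq"
    have "pb (pA r s A) (r + B) y 0 = y 0" using r0 by (simp add: pb_def pA0)
    then show "(if y 0 \<noteq> parity r pv then (cmod (V good y))\<^sup>2 else 0) =
      (\<Prod>l\<in>{0,1}. (\<lambda>l z. if l = 0 then (if z 0 \<noteq> parity r pv then (cmod (W z))\<^sup>2 else 0) else (cmod (Gf z))\<^sup>2) l (pb (p2 l) (mm2 l) y))"
      by (simp add: Vgood p2_def mm2_def norm_mult power_mult_distrib)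
  qed
  also have "\<dots> = (\<Prod>l\<in>{0,1}. \<Sum>z\<in>bits (mm2 l). (\<lambda>l z. if l = 0 then (if z 0 \<noteq> parity r pv then (cmod (W z))\<^sup>2 else 0) else (cmod (Gf z))\<^sup>2) l z)"
    by (rule b2.sum_prod)
  also have "\<dots> = (\<Sum>z\<in>bits (r + B). if z 0 \<noteq> parity r pv then (cmod (W z))\<^sup>2 else 0) * nrm (card Rset) Gf"
    by (simp add: mm2_def nrm_def)
  also have "(\<Sum>z\<in>bits (r + B). if z 0 \<noteq> parity r pv then (cmod (W z))\<^sup>2 else 0) = parity_error D0 (r + B) Lr Mr r pv"
  proof -
    have "parity_error D0 (r + B) Lr Mr r pv = (\<Sum>z\<in>{z\<in>bits (r + B). z 0 \<noteq> parity r pv}. (cmod (W z))\<^sup>2)"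
      unfolding W_def by (rule perr) (use vB r0 in \<open>auto simp: valid_circuit_def\<close>)
    then show ?thesis by (simp add: sum.inter_filter)
  qed
  also have "parity_error D0 (r + B) Lr Mr r pv * nrm (card Rset) Gf \<le> parity_error D0 (r + B) Lr Mr r pv"
  proof -
    have "0 \<le> parity_error D0 (r + B) Lr Mr r pv"
      unfolding W_def using vB r0 by (subst perr) (auto simp: valid_circuit_def intro: sum_nonneg)
    then show ?thesis using nrm_Gf mult_left_le by blast
  qed
  finally show ?thesis using eB by simp
qed

end


lemma sq_add_le: "(cmod (a + b))\<^sup>2 \<le> 2 * (cmod a)\<^sup>2 + 2 * (cmod b)\<^sup>2"
proof -
  have "cmod (a + b) \<le> cmod a + cmod b" by (rule norm_triangle_ineq)
  then have "(cmod (a + b))\<^sup>2 \<le> (cmod a + cmod b)\<^sup>2" by (rule power_mono) simp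
  also have "\<dots> \<le> 2 * (cmod a)\<^sup>2 + 2 * (cmod b)\<^sup>2"
    using sum_squares_ge_zero[of "cmod a - cmod b" 0] by (simp add: power2_eq_square algebra_simps)
  finally show ?thesis .
qed

context constr_in begin

lemma par_eq: "parity n x = parity r pv"
proof -
  have "parity n x = parity r (\<lambda>l. parity s (\<lambda>i. l * s + i < n \<and> x (l * s + i)))"
    by (rule parity_blocks[OF nrs])
  also have "\<dots> = parity r pv"
  proof (rule parity_cong)
    fix l assume "l < r"
    then show "parity s (\<lambda>i. l * s + i < n \<and> x (l * s + i)) = pv l"
      by (simp add: pv_def xb_def) (rule parity_cong, simp)
  qed
  finally show ?thesis .
qed

theorem err_bound:
  fixes eF eB :: real
  assumes eF: "\<forall>x'\<in>bits s. parity_error D (s + A) Ls Ms s x' \<le> eF"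
  and eB: "\<forall>p\<in>bits r. parity_error D0 (r + B) Lr Mr r p \<le> eB"
  shows "parity_error (Suc D + D0) mq (Lg D r s A Ls Lr) (Mg D r s A Ms Mr) n x \<le> 2 * eB + 2 * (r * eF)"
proof -
  let ?S = "{y\<in>bits mq. y 0 \<noteq> parity n x}"
  have mq0: "0 < mq" using r1 s1 by (simp add: add_pos_nonneg)
  have Phi_split: "Phi = (\<lambda>y. good y + bad y)" by (simp add: bad_def)
  have fin: "run_circuit mq (Lg D r s A Ls Lr) (Mg D r s A Ms Mr) (Suc D + D0) (input_state n mq x)
       = (\<lambda>y. V good y + V bad y)"
    unfolding final_eq V_def Phi_split by (rule run_add)
  have "parity_error (Suc D + D0) mq (Lg D r s A Ls Lr) (Mg D r s A Ms Mr) n x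
      = (\<Sum>y\<in>?S. (cmod (run_circuit mq (Lg D r s A Ls Lr) (Mg D r s A Ms Mr) (Suc D + D0) (input_state n mq x) y))\<^sup>2)"
    by (rule perr[OF global_unitary mq0])
  also have "\<dots> = (\<Sum>y\<in>?S. (cmod (V good y + V bad y))\<^sup>2)"
    by (simp only: fin)
  also have "\<dots> \<le> (\<Sum>y\<in>?S. 2 * (cmod (V good y))\<^sup>2 + 2 * (cmod (V bad y))\<^sup>2)"
    by (rule sum_mono) (rule sq_add_le)
  also have "\<dots> = 2 * (\<Sum>y\<in>?S. (cmod (V good y))\<^sup>2) + 2 * (\<Sum>y\<in>?S. (cmod (V bad y))\<^sup>2)"
    by (simp add: sum.distrib sum_distrib_left)
  also have "(\<Sum>y\<in>?S. (cmod (V good y))\<^sup>2) \<le> eB"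
  proof -
    have "(\<Sum>y\<in>?S. (cmod (V good y))\<^sup>2) = (\<Sum>y\<in>bits mq. if y 0 \<noteq> parity r pv then (cmod (V good y))\<^sup>2 else 0)"
      by (simp add: sum.inter_filter par_eq)
    also have "\<dots> \<le> eB" by (rule wp_good) (use eB in \<open>simp add: pv_def restrict_bits\<close>)
    finally show ?thesis .
  qed
  also have "(\<Sum>y\<in>?S. (cmod (V bad y))\<^sup>2) \<le> nrm mq (V bad)"
    unfolding nrm_def by (rule sum_mono2) auto
  also have "nrm mq (V bad) = nrm mq bad" unfolding V_def by (rule run_norm) (use G2_unitary in auto)
  also have "\<dots> \<le> r * eF" by (rule bad_bound[OF eF])
  finally show ?thesis by simp
qed

end


definition rr :: "nat \<Rightarrow> nat \<Rightarrow> nat" where "rr k n = (GREATEST r. r ^ k \<le> n)"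
definition ss :: "nat \<Rightarrow> nat \<Rightarrow> nat" where "ss k n = (n + rr k n - 1) div rr k n"

lemma pow_bound: "1 \<le> k \<Longrightarrow> (r::nat) ^ k \<le> n \<Longrightarrow> r \<le> n"
proof (cases "r = 0")
  case False
  assume "1 \<le> k" "r ^ k \<le> n"
  have "r ^ 1 \<le> r ^ k" using False \<open>1 \<le> k\<close> by (intro power_increasing) auto
  then show ?thesis using \<open>r ^ k \<le> n\<close> by simp
qed simp

lemma rr_props:
  assumes k: "1 \<le> k" and n: "1 \<le> n"
  shows "1 \<le> rr k n" "rr k n ^ k \<le> n" "n < (rr k n + 1) ^ k" "\<And>N. N ^ k \<le> n \<Longrightarrow> N \<le> rr k n"
proof -
  have b: "\<And>y. y ^ k \<le> n \<Longrightarrow> y \<le> n" using pow_bound[OF k] by blast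
  show "rr k n ^ k \<le> n" unfolding rr_def by (rule GreatestI_nat[of _ 1]) (use n b in auto)
  show N: "\<And>N. N ^ k \<le> n \<Longrightarrow> N \<le> rr k n" unfolding rr_def by (rule Greatest_le_nat) (use b in auto)
  show "1 \<le> rr k n" using N[of 1] n by simp
  show "n < (rr k n + 1) ^ k"
  proof (rule ccontr)
    assume "\<not> n < (rr k n + 1) ^ k"
    then have "rr k n + 1 \<le> rr k n" using N by simp
    then show False by simp
  qed
qed

lemma ss_props:
  assumes k: "2 \<le> k" and n: "1 \<le> n"
  shows "n \<le> rr k n * ss k n" "rr k n * ss k n < n + rr k n" "rr k n \<le> ss k n" "1 \<le> ss k n"
    "n \<le> ss k n * ss k n"
proof -
  let ?r = "rr k n"
  have r1: "1 \<le> ?r" using rr_props(1)[of k n] k n by simp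
  have e: "?r * ss k n + (n + ?r - 1) mod ?r = n + ?r - 1" unfolding ss_def by (rule mult_div_mod_eq)
  have "(n + ?r - 1) mod ?r < ?r" using r1 by simp
  then show a: "n \<le> ?r * ss k n" using e r1 by linarith
  show "?r * ss k n < n + ?r" using e r1 by linarith
  show "1 \<le> ss k n" using a n by (cases "ss k n") auto
  have "?r * ?r \<le> ?r ^ k"
  proof -
    have "?r ^ 2 \<le> ?r ^ k" using r1 k by (intro power_increasing) auto
    then show ?thesis by (simp add: power2_eq_square)
  qed
  also have "\<dots> \<le> n" using rr_props(2)[of k n] k n by simp
  also have "\<dots> \<le> ?r * ss k n" by (rule a)
  finally show rs: "?r \<le> ss k n" using r1 by simp
  have "?r * ss k n \<le> ss k n * ss k n" using mult_le_mono1[OF rs, of "ss k n"] .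
  then show "n \<le> ss k n * ss k n" using a by linarith
qed

lemma negl_def2: "negl e \<longleftrightarrow> (\<forall>K. \<exists>N. \<forall>n\<ge>N. \<bar>e n\<bar> < 1 / real n ^ K)"
  unfolding negl_def eventually_sequentially ..

lemma negl_step:
  assumes e0: "negl e0" and e: "negl e" and k: "2 \<le> k"
  shows "negl (\<lambda>n. 2 * e0 (rr k n) + 2 * (real (rr k n) * e (ss k n)))"
  unfolding negl_def2
proof
  fix K :: nat
  obtain N0 where N0: "\<And>m. m \<ge> N0 \<Longrightarrow> \<bar>e0 m\<bar> < 1 / real m ^ (k * (K + 1))"
    using e0 unfolding negl_def2 by blast
  obtain N1 where N1: "\<And>m. m \<ge> N1 \<Longrightarrow> \<bar>e m\<bar> < 1 / real m ^ (2 * (K + 2))"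
    using e unfolding negl_def2 by blast
  define P :: nat where "P = 2 ^ (k * (K + 1))"
  define N where "N = N0 ^ k + N1 ^ k + 4 * P + 4"
  show "\<exists>N. \<forall>n\<ge>N. \<bar>2 * e0 (rr k n) + 2 * (real (rr k n) * e (ss k n))\<bar> < 1 / real n ^ K"
  proof (intro exI allI impI)
    fix n assume nN: "N \<le> n"
    let ?r = "rr k n" and ?s = "ss k n"
    have k1: "1 \<le> k" using k by simp
    have n1: "1 \<le> n" using nN by (simp add: N_def)
    have n4: "4 \<le> n" using nN by (simp add: N_def)
    have nP: "4 * P \<le> n" using nN by (simp add: N_def)
    have r1: "1 \<le> ?r" using rr_props(1)[OF k1 n1] .
    have rN0: "N0 \<le> ?r" using rr_props(4)[OF k1 n1, of N0] nN by (simp add: N_def)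
    have rN1: "N1 \<le> ?r" using rr_props(4)[OF k1 n1, of N1] nN by (simp add: N_def)
    have sN1: "N1 \<le> ?s" using rN1 ss_props(3)[OF k n1] by simp
    have rn: "?r \<le> n" using pow_bound[OF k1 rr_props(2)[OF k1 n1]] .
        have "n < 2 ^ k * ?r ^ k"
    proof -
      have "n < (?r + 1) ^ k" by (rule rr_props(3)[OF k1 n1])
      also have "\<dots> \<le> (2 * ?r) ^ k" using r1 by (intro power_mono) auto
      finally show ?thesis by (simp add: power_mult_distrib)
    qed
    then have "n ^ (K + 1) < (2 ^ k * ?r ^ k) ^ (K + 1)" by (intro power_strict_mono) auto
    also have "\<dots> = P * ?r ^ (k * (K + 1))" by (simp only: P_def power_mult_distrib power_mult)
    finally have a1: "n ^ (K + 1) < P * ?r ^ (k * (K + 1))" .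
    have "4 * n ^ K * P \<le> n ^ (K + 1)"
    proof -
      have "4 * P * n ^ K \<le> n * n ^ K" using nP by (intro mult_le_mono1) simp
      then show ?thesis by (simp add: mult_ac)
    qed
    then have "4 * n ^ K * P < P * ?r ^ (k * (K + 1))" using a1 by linarith
    then have a2: "4 * n ^ K < ?r ^ (k * (K + 1))" by (simp add: mult.commute)
    have t1: "\<bar>e0 ?r\<bar> < 1 / (4 * real n ^ K)"
    proof -
      have "\<bar>e0 ?r\<bar> < 1 / real ?r ^ (k * (K + 1))" using N0 rN0 by simp
      also have "\<dots> \<le> 1 / (4 * real n ^ K)"
      proof -
        have "4 * real n ^ K \<le> real ?r ^ (k * (K + 1))"
          using a2 by (metis (mono_tags, lifting) less_imp_le of_nat_le_iff of_nat_mult of_nat_numeral of_nat_power)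
        moreover have "0 < 4 * real n ^ K" using n1 by simp
        moreover have "0 < real ?r ^ (k * (K + 1))" using r1 by simp
        ultimately show ?thesis by (intro divide_left_mono) (auto intro: mult_pos_pos)
      qed
      finally show ?thesis .
    qed
        have "n ^ (K + 2) \<le> (?s * ?s) ^ (K + 2)" using ss_props(5)[OF k n1] by (intro power_mono) auto
    then have b1: "n ^ (K + 2) \<le> ?s ^ (2 * (K + 2))" by (simp add: power_mult power2_eq_square)
    have t2: "real ?r * \<bar>e ?s\<bar> \<le> 1 / (4 * real n ^ K)"
    proof -
      have "\<bar>e ?s\<bar> \<le> 1 / real ?s ^ (2 * (K + 2))" using N1[OF sN1] by simp
      also have "\<dots> \<le> 1 / real n ^ (K + 2)"
      proof -
        have "real n ^ (K + 2) \<le> real ?s ^ (2 * (K + 2))" using b1 by (metis of_nat_le_iff of_nat_power)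
        moreover have "0 < real n ^ (K + 2)" using n1 by simp
        moreover have "0 < real ?s ^ (2 * (K + 2))" using ss_props(4)[OF k n1] by simp
        ultimately show ?thesis by (intro divide_left_mono) (auto intro: mult_pos_pos)
      qed
      finally have "\<bar>e ?s\<bar> \<le> 1 / real n ^ (K + 2)" .
      then have "real ?r * \<bar>e ?s\<bar> \<le> real n * (1 / real n ^ (K + 2))"
        using rn by (intro mult_mono) auto
      also have "\<dots> = 1 / (real n * real n ^ K)" using n1 by (simp add: power_add power2_eq_square field_simps)
      also have "\<dots> \<le> 1 / (4 * real n ^ K)" using n4 n1 by (intro divide_left_mono mult_right_mono) auto
      finally show ?thesis .
    qed
    have "\<bar>2 * e0 ?r + 2 * (real ?r * e ?s)\<bar> \<le> \<bar>2 * e0 ?r\<bar> + \<bar>2 * (real ?r * e ?s)\<bar>"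
      by (rule abs_triangle_ineq)
    also have "\<dots> = 2 * \<bar>e0 ?r\<bar> + 2 * (real ?r * \<bar>e ?s\<bar>)" by (simp add: abs_mult)
    also have "\<dots> < 2 * (1 / (4 * real n ^ K)) + 2 * (1 / (4 * real n ^ K))" using t1 t2 by linarith
    also have "\<dots> = 1 / real n ^ K" by simp
    finally show "\<bar>2 * e0 ?r + 2 * (real ?r * e ?s)\<bar> < 1 / real n ^ K" .
  qed
qed



lemma anc_bound:
  fixes C c e :: real and a a0 :: "nat \<Rightarrow> nat"
  assumes k: "2 \<le> k" and n: "1 \<le> n" and C: "0 \<le> C" and c: "0 \<le> c" and e: "0 \<le> e"
  and hA: "real (a (ss k n)) \<le> C * real (ss k n) powr (1 + e)"
  and hB: "real (a0 (rr k n)) \<le> c * real (rr k n) ^ k"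
  shows "real (rr k n * ss k n + rr k n * a (ss k n) + a0 (rr k n) - n)
     \<le> (1 + c + C * 2 powr (1 + 2 * e)) * real n powr (1 + e * (real k - 1) / real k)"
proof -
  let ?r = "rr k n" and ?s = "ss k n"
  define R where "R = real ?r"
  define S where "S = real ?s"
  define Nn where "Nn = real n"
  define e' where "e' = e * (real k - 1) / real k"
  have k1: "1 \<le> k" using k by simp
  have kpos: "0 < real k" using k by simp
  have r1: "1 \<le> R" using rr_props(1)[OF k1 n] by (simp add: R_def)
  have s1: "1 \<le> S" using ss_props(4)[OF k n] by (simp add: S_def)
  have n1: "1 \<le> Nn" using n by (simp add: Nn_def)
  have rn: "R \<le> Nn" using pow_bound[OF k1 rr_props(2)[OF k1 n]] by (simp add: R_def Nn_def)
  have rk: "R ^ k \<le> Nn" using rr_props(2)[OF k1 n] unfolding R_def Nn_def by (metis of_nat_le_iff of_nat_power)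
  have rs: "R * S < Nn + R" using ss_props(2)[OF k n] unfolding R_def S_def Nn_def by (metis of_nat_add of_nat_less_iff of_nat_mult)
  have e'eq: "e' = e - e / real k" using kpos by (simp add: e'_def field_simps)
    have nat1: "?r * ?s + ?r * a ?s + a0 ?r - n \<le> ?r + ?r * a ?s + a0 ?r"
    using ss_props(2)[OF k n] by linarith
  have "real (?r * ?s + ?r * a ?s + a0 ?r - n) \<le> R + R * real (a ?s) + real (a0 ?r)"
    using nat1 unfolding R_def by (metis of_nat_add of_nat_le_iff of_nat_mult)
    have root: "Nn powr (1 / real k) < 2 * R"
  proof -
    have "n < (2 * ?r) ^ k"
    proof -
      have "n < (?r + 1) ^ k" by (rule rr_props(3)[OF k1 n])
      also have "\<dots> \<le> (2 * ?r) ^ k" using rr_props(1)[OF k1 n] by (intro power_mono) auto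
      finally show ?thesis .
    qed
    then have "Nn < (2 * R) ^ k" unfolding Nn_def R_def by (metis of_nat_less_iff of_nat_mult of_nat_numeral of_nat_power)
    then have "Nn powr (1 / real k) < ((2 * R) ^ k) powr (1 / real k)"
      using n1 kpos by (intro powr_less_mono2) auto
    also have "((2 * R) ^ k) powr (1 / real k) = 2 * R"
    proof -
      have "((2 * R) ^ k) = (2 * R) powr (real k)" using r1 by (simp add: powr_realpow)
      then show ?thesis using kpos r1 by (simp add: powr_powr)
    qed
    finally show ?thesis .
  qed
    have "S \<le> 2 * Nn / R" using rs rn r1 by (simp add: field_simps)
  then have A1: "S powr (1 + e) \<le> (2 * Nn / R) powr (1 + e)"
    using s1 e by (intro powr_mono2) auto
  have A2: "R * (2 * Nn / R) powr (1 + e) = (2 * Nn) powr (1 + e) / R powr e"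
  proof -
    have "(2 * Nn / R) powr (1 + e) = (2 * Nn) powr (1 + e) / R powr (1 + e)"
      using r1 n1 by (simp add: powr_divide)
    moreover have "R powr (1 + e) = R * R powr e" using r1 by (simp add: powr_add)
    ultimately show ?thesis using r1 by (simp add: field_simps)
  qed
  have A3: "Nn powr (e / real k) / 2 powr e \<le> R powr e"
  proof -
    have "(Nn powr (1 / real k) / 2) powr e \<le> R powr e"
      using root e n1 by (intro powr_mono2) auto
    moreover have "(Nn powr (1 / real k) / 2) powr e = Nn powr (e / real k) / 2 powr e"
      using n1 by (simp add: powr_divide powr_powr)
    ultimately show ?thesis by simp
  qed
  have A4: "(2 * Nn) powr (1 + e) / R powr e \<le> 2 powr (1 + 2 * e) * Nn powr (1 + e')"
  proof -
    have pos: "0 < Nn powr (e / real k) / 2 powr e" using n1 by simp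
    have "(2 * Nn) powr (1 + e) / R powr e \<le> (2 * Nn) powr (1 + e) / (Nn powr (e / real k) / 2 powr e)"
      using A3 pos r1 by (intro divide_left_mono) (auto intro!: mult_pos_pos divide_pos_pos)
    also have "\<dots> = 2 powr (1 + e) * 2 powr e * (Nn powr (1 + e) / Nn powr (e / real k))"
      using n1 by (simp add: powr_mult field_simps)
    also have "\<dots> = 2 powr (1 + 2 * e) * Nn powr (1 + e')"
    proof -
      have "2 powr (1 + e) * 2 powr e = (2::real) powr (1 + 2 * e)" by (simp add: powr_add[symmetric] add_ac)
      moreover have "Nn powr (1 + e) / Nn powr (e / real k) = Nn powr (1 + e')"
        using n1 by (simp add: powr_diff[symmetric] e'eq add_diff_eq)
      ultimately show ?thesis by simp
    qed
    finally show ?thesis .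
  qed
  have RA: "R * real (a ?s) \<le> C * 2 powr (1 + 2 * e) * Nn powr (1 + e')"
  proof -
    have "R * real (a ?s) \<le> R * (C * S powr (1 + e))" using hA r1 by (simp add: S_def)
    also have "\<dots> \<le> R * (C * (2 * Nn / R) powr (1 + e))"
      using A1 C r1 by (intro mult_left_mono) auto
    also have "\<dots> = C * (R * (2 * Nn / R) powr (1 + e))" by simp
    also have "\<dots> \<le> C * (2 powr (1 + 2 * e) * Nn powr (1 + e'))"
      using A2 A4 C by (intro mult_left_mono) auto
    finally show ?thesis by simp
  qed
  have Bb: "real (a0 ?r) \<le> c * Nn" using hB rk c by (simp add: R_def) (meson mult_left_mono order_trans)
  have npow: "Nn \<le> Nn powr (1 + e')"
  proof -
    have "0 \<le> e'" using e k by (simp add: e'_def)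
    then have "Nn powr 1 \<le> Nn powr (1 + e')" using n1 by (intro powr_mono) auto
    then show ?thesis using n1 by simp
  qed
  have "real (?r * ?s + ?r * a ?s + a0 ?r - n) \<le> Nn + C * 2 powr (1 + 2 * e) * Nn powr (1 + e') + c * Nn"
    using \<open>real (?r * ?s + ?r * a ?s + a0 ?r - n) \<le> R + R * real (a ?s) + real (a0 ?r)\<close> rn RA Bb by linarith
  also have "\<dots> \<le> Nn powr (1 + e') + C * 2 powr (1 + 2 * e) * Nn powr (1 + e') + c * Nn powr (1 + e')"
    using npow c C by (intro add_mono mult_left_mono) auto
  also have "\<dots> = (1 + c + C * 2 powr (1 + 2 * e)) * Nn powr (1 + e')" by (simp add: algebra_simps)
  finally show ?thesis by (simp add: Nn_def e'_def)
qed



lemma step: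
  fixes C c e :: real
  assumes base: "qac0_computes_parity D0 a0 L0 M0" and hB: "\<forall>n\<ge>1. real (a0 n) \<le> c * real n ^ k"
  and cur: "qac0_computes_parity D a L M" and hA: "\<forall>n\<ge>1. real (a n) \<le> C * real n powr (1 + e)"
  and k: "2 \<le> k" and C: "0 \<le> C" and c: "0 \<le> c" and e: "0 \<le> e"
  shows "\<exists>a' L' M'. qac0_computes_parity (Suc D + D0) a' L' M' \<and>
     (\<forall>n\<ge>1. real (a' n) \<le> (1 + c + C * 2 powr (1 + 2 * e)) * real n powr (1 + e * (real k - 1) / real k))"
proof -
  define a' where "a' n = rr k n * ss k n + rr k n * a (ss k n) + a0 (rr k n) - n" for n
  define L' where "L' n = Lg D (rr k n) (ss k n) (a (ss k n)) (L (ss k n)) (L0 (rr k n))" for n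
  define M' where "M' n = Mg D (rr k n) (ss k n) (a (ss k n)) (M (ss k n)) (M0 (rr k n))" for n
  obtain \<epsilon> where eps: "negl \<epsilon>" "\<forall>n\<ge>1. \<forall>x\<in>bits n. parity_error D (n + a n) (L n) (M n) n x \<le> \<epsilon> n"
    using cur unfolding qac0_computes_parity_def by blast
  obtain \<epsilon>0 where eps0: "negl \<epsilon>0" "\<forall>n\<ge>1. \<forall>x\<in>bits n. parity_error D0 (n + a0 n) (L0 n) (M0 n) n x \<le> \<epsilon>0 n"
    using base unfolding qac0_computes_parity_def by blast
  have k1: "1 \<le> k" using k by simp
  have C_n: "constr_in D D0 (rr k n) (ss k n) (a (ss k n)) (a0 (rr k n)) (L (ss k n)) (L0 (rr k n)) (M (ss k n)) (M0 (rr k n)) n"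
    if n: "1 \<le> n" for n
  proof unfold_locales
    show "valid_circuit D (ss k n + a (ss k n)) (L (ss k n)) (M (ss k n))"
      using cur ss_props(4)[OF k n] unfolding qac0_computes_parity_def by blast
    show "valid_circuit D0 (rr k n + a0 (rr k n)) (L0 (rr k n)) (M0 (rr k n))"
      using base rr_props(1)[OF k1 n] unfolding qac0_computes_parity_def by blast
    show "1 \<le> rr k n" by (rule rr_props(1)[OF k1 n])
    show "1 \<le> ss k n" by (rule ss_props(4)[OF k n])
    show "n \<le> rr k n * ss k n" by (rule ss_props(1)[OF k n])
  qed
  have mq: "n + a' n = rr k n * ss k n + rr k n * a (ss k n) + a0 (rr k n)" if n: "1 \<le> n" for n
    using ss_props(1)[OF k n] by (simp add: a'_def)
  have "qac0_computes_parity (Suc D + D0) a' L' M'"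
    unfolding qac0_computes_parity_def
  proof (intro conjI allI impI)
    fix n :: nat assume n: "1 \<le> n"
    interpret ci: constr_in D D0 "rr k n" "ss k n" "a (ss k n)" "a0 (rr k n)" "L (ss k n)" "L0 (rr k n)" "M (ss k n)" "M0 (rr k n)" n undefined
      by (rule C_n[OF n])
    show "valid_circuit (Suc D + D0) (n + a' n) (L' n) (M' n)"
      unfolding mq[OF n] L'_def M'_def by (rule ci.valid_global)
  next
    show "\<exists>\<epsilon>'. negl \<epsilon>' \<and> (\<forall>n\<ge>1. \<forall>x\<in>bits n. parity_error (Suc D + D0) (n + a' n) (L' n) (M' n) n x \<le> \<epsilon>' n)"
    proof (intro exI conjI allI impI ballI)
      show "negl (\<lambda>n. 2 * \<epsilon>0 (rr k n) + 2 * (real (rr k n) * \<epsilon> (ss k n)))"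
        by (rule negl_step[OF eps0(1) eps(1) k])
    next
      fix n :: nat and x assume n: "1 \<le> n" and x: "x \<in> bits n"
      interpret ci: constr_in D D0 "rr k n" "ss k n" "a (ss k n)" "a0 (rr k n)" "L (ss k n)" "L0 (rr k n)" "M (ss k n)" "M0 (rr k n)" n x
        by (rule C_n[OF n])
      show "parity_error (Suc D + D0) (n + a' n) (L' n) (M' n) n x \<le> 2 * \<epsilon>0 (rr k n) + 2 * (real (rr k n) * \<epsilon> (ss k n))"
        unfolding mq[OF n] L'_def M'_def
      proof (rule ci.err_bound)
        show "\<forall>x'\<in>bits (ss k n). parity_error D (ss k n + a (ss k n)) (L (ss k n)) (M (ss k n)) (ss k n) x' \<le> \<epsilon> (ss k n)"
          using eps(2) ss_props(4)[OF k n] by blast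
        show "\<forall>p\<in>bits (rr k n). parity_error D0 (rr k n + a0 (rr k n)) (L0 (rr k n)) (M0 (rr k n)) (rr k n) p \<le> \<epsilon>0 (rr k n)"
          using eps0(2) rr_props(1)[OF k1 n] by blast
      qed
    qed
  qed
  moreover have "\<forall>n\<ge>1. real (a' n) \<le> (1 + c + C * 2 powr (1 + 2 * e)) * real n powr (1 + e * (real k - 1) / real k)"
  proof (intro allI impI)
    fix n :: nat assume n: "1 \<le> n"
    show "real (a' n) \<le> (1 + c + C * 2 powr (1 + 2 * e)) * real n powr (1 + e * (real k - 1) / real k)"
      unfolding a'_def
    proof (rule anc_bound[OF k n C c e])
      show "real (a (ss k n)) \<le> C * real (ss k n) powr (1 + e)" using hA ss_props(4)[OF k n] by blast
      show "real (a0 (rr k n)) \<le> c * real (rr k n) ^ k" using hB rr_props(1)[OF k1 n] by blast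
    qed
  qed
  ultimately show ?thesis by blast
qed



lemma iterate:
  fixes c :: real
  assumes base: "qac0_computes_parity d a0 L0 M0" and hB: "\<forall>n\<ge>1. real (a0 n) \<le> c * real n ^ k"
  and k: "2 \<le> k" and c: "0 \<le> c"
  shows "\<exists>a L M C. qac0_computes_parity (d + j * Suc d) a L M \<and> 0 \<le> C \<and>
     (\<forall>n\<ge>1. real (a n) \<le> C * real n powr (1 + (real k - 1) * ((real k - 1) / real k) ^ j))"
proof (induction j)
  case 0
  have "\<forall>n\<ge>1. real (a0 n) \<le> c * real n powr (1 + (real k - 1) * ((real k - 1) / real k) ^ 0)"
  proof (intro allI impI)
    fix n :: nat assume n: "1 \<le> n"
    have "real n powr (1 + (real k - 1) * ((real k - 1) / real k) ^ 0) = real n ^ k"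
      using n by (simp add: powr_realpow)
    then show "real (a0 n) \<le> c * real n powr (1 + (real k - 1) * ((real k - 1) / real k) ^ 0)"
      using hB n by simp
  qed
  then show ?case using base c by auto
next
  case (Suc j)
  then obtain a L M C where IH: "qac0_computes_parity (d + j * Suc d) a L M" "0 \<le> C"
    "\<forall>n\<ge>1. real (a n) \<le> C * real n powr (1 + (real k - 1) * ((real k - 1) / real k) ^ j)" by blast
  have e0: "0 \<le> (real k - 1) * ((real k - 1) / real k) ^ j" using k by simp
  obtain a' L' M' where S: "qac0_computes_parity (Suc (d + j * Suc d) + d) a' L' M'"
    "\<forall>n\<ge>1. real (a' n) \<le> (1 + c + C * 2 powr (1 + 2 * ((real k - 1) * ((real k - 1) / real k) ^ j))) *
        real n powr (1 + (real k - 1) * ((real k - 1) / real k) ^ j * (real k - 1) / real k)"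
    using step[OF base hB IH(1) IH(3) k IH(2) c e0] by blast
  have dd: "Suc (d + j * Suc d) + d = d + Suc j * Suc d" by simp
  have ee: "(real k - 1) * ((real k - 1) / real k) ^ j * (real k - 1) / real k = (real k - 1) * ((real k - 1) / real k) ^ Suc j"
    by (simp add: field_simps)
  have "0 \<le> 1 + c + C * 2 powr (1 + 2 * ((real k - 1) * ((real k - 1) / real k) ^ j))"
    using c IH(2) by simp
  then show ?case using S dd ee by metis
qed

lemma perr_le1:
  assumes "valid_circuit d m L M" "0 < m"
  shows "parity_error d m L M n x \<le> 1"
proof -
  have U: "\<forall>j\<le>d. \<forall>i<m. unitary2 (L j i)" using assms(1) by (simp add: valid_circuit_def)
  have "parity_error d m L M n x = (\<Sum>y\<in>{y\<in>bits m. y 0 \<noteq> parity n x}. (cmod (run_circuit m L M d (input_state n m x) y))\<^sup>2)"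
    by (rule perr[OF U assms(2)])
  also have "\<dots> \<le> nrm m (run_circuit m L M d (input_state n m x))"
    unfolding nrm_def by (rule sum_mono2) auto
  also have "\<dots> = 1" using run_norm[OF U] nrm_input by simp
  finally show ?thesis .
qed

lemma shrink:
  fixes C e E :: real
  assumes F: "qac0_computes_parity D a L M" and hA: "\<forall>n\<ge>1. real (a n) \<le> C * real n powr (1 + e)"
  and eE: "e < E"
  shows "\<exists>a' L' M'. qac0_computes_parity D a' L' M' \<and> (\<forall>n\<ge>1. real (a' n) \<le> real n powr (1 + E))"
proof -
  define N :: nat where "N = nat \<lceil>(max C 1) powr (1 / (E - e))\<rceil> + 1"
  have bigN: "C * real n powr (1 + e) \<le> real n powr (1 + E)" if n: "N \<le> n" for n
  proof -
    have n1: "1 \<le> real n" using n by (simp add: N_def)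
    have "(max C 1) powr (1 / (E - e)) \<le> real n" using n unfolding N_def by linarith
    then have "((max C 1) powr (1 / (E - e))) powr (E - e) \<le> real n powr (E - e)"
      using eE by (intro powr_mono2) auto
    also have "((max C 1) powr (1 / (E - e))) powr (E - e) = max C 1"
      using eE by (simp add: powr_powr)
    finally have "C \<le> real n powr (E - e)" by simp
    then have "C * real n powr (1 + e) \<le> real n powr (E - e) * real n powr (1 + e)"
      by (intro mult_right_mono) auto
    also have "\<dots> = real n powr (1 + E)" using n1 by (simp add: powr_add[symmetric] add_ac)
    finally show ?thesis .
  qed
  obtain \<epsilon> where eps: "negl \<epsilon>" "\<forall>n\<ge>1. \<forall>x\<in>bits n. parity_error D (n + a n) (L n) (M n) n x \<le> \<epsilon> n"
    using F unfolding qac0_computes_parity_def by blast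
  define a' where "a' n = (if n < N then 0 else a n)" for n
  define L' where "L' n = (if n < N then (\<lambda>_ _. idg) else L n)" for n
  define M' where "M' n = (if n < N then (\<lambda>_. {}) else M n)" for n
  define \<epsilon>' where "\<epsilon>' n = (if n < N then 1 else \<epsilon> n)" for n
  have valid: "valid_circuit D (n + a' n) (L' n) (M' n)" if n: "1 \<le> n" for n
  proof (cases "n < N")
    case True then show ?thesis by (simp add: a'_def L'_def M'_def valid_circuit_def unitary_idg valid_cz_layer_def)
  next
    case False then show ?thesis using F n by (simp add: a'_def L'_def M'_def qac0_computes_parity_def)
  qed
  have "qac0_computes_parity D a' L' M'"
    unfolding qac0_computes_parity_def
  proof (intro conjI allI impI exI[of _ \<epsilon>'] ballI)
    fix n :: nat assume "1 \<le> n" then show "valid_circuit D (n + a' n) (L' n) (M' n)" by (rule valid)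
  next
    show "negl \<epsilon>'"
      unfolding negl_def
    proof
      fix K
      have "\<forall>\<^sub>F n in sequentially. \<bar>\<epsilon> n\<bar> < 1 / real n ^ K" using eps(1) by (simp add: negl_def)
      moreover have "\<forall>\<^sub>F n in sequentially. N \<le> n" by (simp add: eventually_ge_at_top)
      ultimately show "\<forall>\<^sub>F n in sequentially. \<bar>\<epsilon>' n\<bar> < 1 / real n ^ K"
        by eventually_elim (simp add: \<epsilon>'_def)
    qed
  next
    fix n :: nat and x assume n: "1 \<le> n" and x: "x \<in> bits n"
    show "parity_error D (n + a' n) (L' n) (M' n) n x \<le> \<epsilon>' n"
    proof (cases "n < N")
      case True then show ?thesis using perr_le1[OF valid[OF n]] n by (simp add: \<epsilon>'_def)
    next
      case False then show ?thesis using eps(2) n x by (simp add: a'_def L'_def M'_def \<epsilon>'_def)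
    qed
  qed
  moreover have "\<forall>n\<ge>1. real (a' n) \<le> real n powr (1 + E)"
  proof (intro allI impI)
    fix n :: nat assume n: "1 \<le> n"
    show "real (a' n) \<le> real n powr (1 + E)"
    proof (cases "n < N")
      case True then show ?thesis by (simp add: a'_def)
    next
      case False
      have "real (a n) \<le> C * real n powr (1 + e)" using hA n by blast
      also have "\<dots> \<le> real n powr (1 + E)" using bigN[of n] False by simp
      finally show ?thesis using False by (simp add: a'_def)
    qed
  qed
  ultimately show ?thesis by blast
qed



theorem corollary5p3:
  fixes \<delta> :: "real \<Rightarrow> real"
  assumes "filterlim \<delta> at_top at_top"
    and "\<forall>d anc L M. (\<forall>n\<ge>1. real (anc n) \<le> real n powr (1 + exp (- real d / \<delta> (real d))))
            \<longrightarrow> \<not> qac0_computes_parity d anc L M"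
  shows "\<not> (\<exists>d anc L M c k. (\<forall>n\<ge>1. real (anc n) \<le> c * real n ^ k) \<and> qac0_computes_parity d anc L M)"
proof
  assume "\<exists>d anc L M c k. (\<forall>n\<ge>1. real (anc n) \<le> c * real n ^ k) \<and> qac0_computes_parity d anc L M"
  then obtain d anc L M c k where hB: "\<forall>n\<ge>1. real (anc n) \<le> c * real n ^ k" and base: "qac0_computes_parity d anc L M"
    by blast
  define k' where "k' = max k 2"
  define c' where "c' = max c 0"
  have k': "2 \<le> k'" by (simp add: k'_def)
  have c': "0 \<le> c'" by (simp add: c'_def)
  have hB': "\<forall>n\<ge>1. real (anc n) \<le> c' * real n ^ k'"
  proof (intro allI impI)
    fix n :: nat assume n: "1 \<le> n"
    have "real (anc n) \<le> c * real n ^ k" using hB n by blast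
    also have "\<dots> \<le> c' * real n ^ k" by (intro mult_right_mono) (auto simp: c'_def)
    also have "\<dots> \<le> c' * real n ^ k'" using n c' by (intro mult_left_mono power_increasing) (auto simp: k'_def)
    finally show "real (anc n) \<le> c' * real n ^ k'" .
  qed
  define K where "K = real k'"
  have K2: "2 \<le> K" using k' by (simp add: K_def)
  define q where "q = ln (K / (K - 1))"
  have q0: "0 < q" unfolding q_def using K2 by (intro ln_gt_zero) (simp add: field_simps)
  have rho: "(K - 1) / K = exp (- q)"
  proof -
    have "exp q = K / (K - 1)" unfolding q_def using K2 by simp
    then show ?thesis by (simp add: exp_minus)
  qed
  define Mb where "Mb = 2 * (real d + 1) / q"
  have Mb0: "0 < Mb" using q0 by (simp add: Mb_def)
  obtain X where X: "\<And>x. x \<ge> X \<Longrightarrow> Mb \<le> \<delta> x"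
    using assms(1) unfolding filterlim_at_top eventually_at_top_linorder by blast
  define j :: nat where "j = nat \<lceil>X\<rceil> + nat \<lceil>2 * (K - 2) / q\<rceil> + 2"
  define D :: nat where "D = d + j * Suc d"
  have jX: "X \<le> real j" unfolding j_def by linarith
  have jK: "2 * (K - 2) / q + 2 \<le> real j" unfolding j_def by linarith
  have DX: "real j \<le> real D" by (simp add: D_def)
  have dD: "Mb \<le> \<delta> (real D)" using X jX DX by simp
  have Dle: "real D \<le> (real j + 1) * (real d + 1)" by (simp add: D_def algebra_simps)
  have "real D / \<delta> (real D) \<le> (real j + 1) * (real d + 1) / Mb"
    using Dle dD Mb0 by (intro frac_le) auto
  also have "\<dots> = (real j + 1) * q / 2" using q0 by (simp add: Mb_def field_simps)
  finally have ratio: "real D / \<delta> (real D) \<le> (real j + 1) * q / 2" .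
  define E where "E = exp (- real D / \<delta> (real D))"
  have E1: "exp (- ((real j + 1) * q / 2)) \<le> E"
    unfolding E_def using ratio by simp
  define ej where "ej = (K - 1) * ((K - 1) / K) ^ j"
  have ej: "ej = (K - 1) * exp (- (real j * q))"
    unfolding ej_def rho by (simp add: exp_of_nat_mult[symmetric])
  have "K - 1 < exp ((real j - 1) * q / 2)"
  proof -
    have "2 * (K - 2) / q < real j - 1" using jK by linarith
    then have "2 * (K - 2) < (real j - 1) * q" using q0 by (simp add: field_simps)
    then have "K - 1 < 1 + (real j - 1) * q / 2" by (simp add: field_simps)
    also have "\<dots> \<le> exp ((real j - 1) * q / 2)" by (rule exp_ge_add_one_self)
    finally show ?thesis .
  qed
  then have "ej < exp ((real j - 1) * q / 2) * exp (- (real j * q))"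
    unfolding ej by (intro mult_strict_right_mono) auto
  also have "\<dots> = exp (- ((real j + 1) * q / 2))" by (simp add: exp_add[symmetric] field_simps)
  finally have ejE: "ej < E" using E1 by simp
  obtain a1 L1 M1 C1 where F: "qac0_computes_parity (d + j * Suc d) a1 L1 M1" "0 \<le> C1"
     "\<forall>n\<ge>1. real (a1 n) \<le> C1 * real n powr (1 + (real k' - 1) * ((real k' - 1) / real k') ^ j)"
    using iterate[OF base hB' k' c', of j] by blast
  have F3: "\<forall>n\<ge>1. real (a1 n) \<le> C1 * real n powr (1 + ej)" using F(3) by (simp add: ej_def K_def)
  obtain a2 L2 M2 where G: "qac0_computes_parity D a2 L2 M2" "\<forall>n\<ge>1. real (a2 n) \<le> real n powr (1 + E)"
    using shrink[OF F(1)[folded D_def] F3 ejE] by blast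
  then show False using assms(2) unfolding E_def by blast
qed



end
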